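(* Assume $s>2c$, and let $f^*=f^{(s-c)}$ be the voting rule with parameter $r=s-c$ (thresholds $a=b\to\infty$). Then for every admissible attack $g$, $$\gamma(f^*,g)\ge (s-2c)\,I,$$ where $I=\min\{I_0,I_1\}$.
   Context: A binary state $\theta\in\{0,1\}$ is observed by $s$ sensors indexed by $\mathcal{S}=\{1,\dots,s\}$; at each time $k\in\mathbb{Z}^+$ sensor $i$ produces a real observation $x_i(k)$. Let $\mu,\nu$ be mutually absolutely continuous Borel probability measures on $\mathbb{R}$. Under $\mathbb{P}_\theta$ all $x_i(k)$ are independent, with law $\nu$ if $\theta=0$ and $\mu$ if $\theta=1$. Let $I_1=\int\log\frac{d\mu}{d\nu}\,d\mu$, $I_0=-\int\log\frac{d\mu}{d\nu}\,d\nu$, assumed $0<I_0,I_1<\infty$, and $I=\min\{I_0,I_1\}$. Attack model: an attacker compromises a fixed set $\mathcal{C}\subseteq\mathcal{S}$ with $|\mathcal{C}|=c$ (the detector knows $c$ but not $\mathcal{C}$). The fusion center receives $x'(k)=x(k)+x^a(k)$, where $x^a(k)\in\mathbb{R}^s$, the union over $k$ of the supports of $x^a(k)$ equals $\mathcal{C}$, and $x^a(k)=g(X_{\mathcal{C}}(k),X^a(k-1),\theta,k)$ is a measurable (possibly randomized) function of the true observations of the compromised sensors up to time $k$, the previously injected vectors, the true state $\theta$, and $k$. Such $g$ is an admissible attack; $\mathbb{P}^g_\theta,\mathbb{E}^g_\theta$ denote probability and expectation of the manipulated observations. A detection strategy is $f=(f_1,f_2,\dots)$ with $f_k$ mapping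 $x'(1),\dots,x'(k)$ to $\{\text{continue},0,1\}$; stopping time $T$ is the first $k$ with $f_k\neq\text{continue}$, decision $f_T$. With $\alpha=\mathbb{P}^g_0[f_T=1]$, $\beta=\mathbb{P}^g_1[f_T=0]$, $D(T)=\max_\theta\mathbb{E}^g_\theta[T]$, the performance is $\gamma(f,g)=\lim_{\alpha=\beta\to0^+}\frac{\log(1/\alpha)}{D(T)}$, the limit taken along the family of tests for which $\alpha=\beta\to0$. Voting rule $f^{(r)}$ ($s/2<r\le s$): with $S_i(n)=\sum_{k=1}^n\log\frac{d\mu}{d\nu}(x'_i(k))$ computed from the received observations, thresholds $a,b>0$, let $\tau^+_i(b)=\inf\{k:S_i(k)\ge b\}$, $\tau^-_i(a)=\inf\{k:S_i(k)\le -a\}$, and $\tau^\pm_{(j)}$ the $j$-th smallest of these over $i\in\mathcal{S}$. The rule stops at $\min\{\tau^-_{(r)}(a),\tau^+_{(r)}(b)\}$, deciding $0$ if $\tau^-_{(r)}(a)<\tau^+_{(r)}(b)$, $1$ if $\tau^+_{(r)}(b)<\tau^-_{(r)}(a)$, and $0$ or $1$ with probability $1/2$ each if equal. *)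

theory Defs
  imports "HOL-Probability.Probability"
begin

(* Observation histories are functions  x :: nat => nat => real,  x k i = observation of
   sensor i at time k.  Sensors are 1..s, times are 1,2,...  (time 0 entries are dummies).
   The state theta is a natural number in {0,1}. *)

definition hist_space :: "(nat \<Rightarrow> nat \<Rightarrow> real) measure" where
  "hist_space = PiM UNIV (\<lambda>_. PiM UNIV (\<lambda>_. (borel :: real measure)))"

definition vec_space :: "(nat \<Rightarrow> real) measure" where
  "vec_space = PiM UNIV (\<lambda>_. (borel :: real measure))"

definition obs_law :: "real measure \<Rightarrow> real measure \<Rightarrow> nat \<Rightarrow> real measure" where
  "obs_law \<mu> \<nu> \<theta> = (if \<theta> = 1 then \<mu> else \<nu>)"

(* probability space: i.i.d. true observations (all sensors, all times) times the
   attacker's private randomness R *)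
definition sample_space ::
  "real measure \<Rightarrow> real measure \<Rightarrow> 'r measure \<Rightarrow> nat \<Rightarrow> ((nat \<Rightarrow> nat \<Rightarrow> real) \<times> 'r) measure" where
  "sample_space \<mu> \<nu> R \<theta> =
     PiM UNIV (\<lambda>_::nat. PiM UNIV (\<lambda>_::nat. obs_law \<mu> \<nu> \<theta>)) \<Otimes>\<^sub>M R"

definition comp_hist :: "nat set \<Rightarrow> (nat \<Rightarrow> nat \<Rightarrow> real) \<Rightarrow> nat \<Rightarrow> (nat \<Rightarrow> nat \<Rightarrow> real)" where
  "comp_hist C x k = (\<lambda>t i. if 1 \<le> t \<and> t \<le> k \<and> i \<in> C then x t i else 0)"

(* inj_prefix ... k = the injected vectors at times 1..k-1 (zero elsewhere);
   attack function g theta k (compromised history up to k) (previous injections) omega *)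
primrec inj_prefix ::
  "(nat \<Rightarrow> nat \<Rightarrow> (nat \<Rightarrow> nat \<Rightarrow> real) \<Rightarrow> (nat \<Rightarrow> nat \<Rightarrow> real) \<Rightarrow> 'r \<Rightarrow> (nat \<Rightarrow> real))
    \<Rightarrow> nat \<Rightarrow> nat set \<Rightarrow> (nat \<Rightarrow> nat \<Rightarrow> real) \<Rightarrow> 'r \<Rightarrow> nat \<Rightarrow> (nat \<Rightarrow> nat \<Rightarrow> real)" where
  "inj_prefix g \<theta> C x \<omega> 0 = (\<lambda>_ _. 0)"
| "inj_prefix g \<theta> C x \<omega> (Suc k) =
     (let P = inj_prefix g \<theta> C x \<omega> k in
      if k = 0 then P else P(k := g \<theta> k (comp_hist C x k) P \<omega>))"

definition attack_vec where
  "attack_vec g \<theta> C x \<omega> k = inj_prefix g \<theta> C x \<omega> (Suc k) k"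

definition received where
  "received g \<theta> C x \<omega> = (\<lambda>k i. x k i + attack_vec g \<theta> C x \<omega> k i)"

definition measurable_attack ::
  "'r measure \<Rightarrow> (nat \<Rightarrow> nat \<Rightarrow> (nat \<Rightarrow> nat \<Rightarrow> real) \<Rightarrow> (nat \<Rightarrow> nat \<Rightarrow> real) \<Rightarrow> 'r \<Rightarrow> (nat \<Rightarrow> real)) \<Rightarrow> bool" where
  "measurable_attack R g \<longleftrightarrow>
     (\<forall>\<theta>\<in>{0,1}. \<forall>k. (\<lambda>(h, p, \<omega>). g \<theta> k h p \<omega>)
        \<in> measurable (hist_space \<Otimes>\<^sub>M (hist_space \<Otimes>\<^sub>M R)) vec_space)"

definition attack_support where
  "attack_support g \<theta> C x \<omega> = (\<Union>k\<in>{1..}. {i. attack_vec g \<theta> C x \<omega> k i \<noteq> 0})"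

definition llr_sum :: "(real \<Rightarrow> real) \<Rightarrow> (nat \<Rightarrow> nat \<Rightarrow> real) \<Rightarrow> nat \<Rightarrow> nat \<Rightarrow> real" where
  "llr_sum L y i n = (\<Sum>k=1..n. L (y k i))"

definition tau_up :: "(real \<Rightarrow> real) \<Rightarrow> (nat \<Rightarrow> nat \<Rightarrow> real) \<Rightarrow> real \<Rightarrow> nat \<Rightarrow> enat" where
  "tau_up L y b i = (if \<exists>k\<ge>1. b \<le> llr_sum L y i k
                     then enat (LEAST k. k \<ge> 1 \<and> b \<le> llr_sum L y i k) else \<infinity>)"

definition tau_down :: "(real \<Rightarrow> real) \<Rightarrow> (nat \<Rightarrow> nat \<Rightarrow> real) \<Rightarrow> real \<Rightarrow> nat \<Rightarrow> enat" where
  "tau_down L y a i = (if \<exists>k\<ge>1. llr_sum L y i k \<le> - a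
                     then enat (LEAST k. k \<ge> 1 \<and> llr_sum L y i k \<le> - a) else \<infinity>)"

definition order_stat :: "nat \<Rightarrow> nat \<Rightarrow> (nat \<Rightarrow> enat) \<Rightarrow> enat" where
  "order_stat s j t = sort (map t [1..<s+1]) ! (j - 1)"

definition vote_up where "vote_up L s r b y = order_stat s r (tau_up L y b)"
definition vote_down where "vote_down L s r a y = order_stat s r (tau_down L y a)"
definition vote_T where "vote_T L s r a b y = min (vote_down L s r a y) (vote_up L s r b y)"

(* probability of a given (wrong) decision: the wrong side crosses strictly first, or a finite
   tie broken by an independent fair coin in favour of the wrong side *)
definition dec_prob :: "'a measure \<Rightarrow> ('a \<Rightarrow> enat) \<Rightarrow> ('a \<Rightarrow> enat) \<Rightarrow> real" where
  "dec_prob M tw tr = measure M {z \<in> space M. tw z < tr z}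
                     + 1/2 * measure M {z \<in> space M. tw z = tr z \<and> tw z \<noteq> \<infinity>}"

definition alpha_err where
  "alpha_err \<mu> \<nu> R g C L s r a b =
     dec_prob (sample_space \<mu> \<nu> R 0)
       (\<lambda>z. vote_up L s r b (received g 0 C (fst z) (snd z)))
       (\<lambda>z. vote_down L s r a (received g 0 C (fst z) (snd z)))"

definition beta_err where
  "beta_err \<mu> \<nu> R g C L s r a b =
     dec_prob (sample_space \<mu> \<nu> R 1)
       (\<lambda>z. vote_down L s r a (received g 1 C (fst z) (snd z)))
       (\<lambda>z. vote_up L s r b (received g 1 C (fst z) (snd z)))"

definition exp_T where
  "exp_T \<mu> \<nu> R g C L s r a b \<theta> =
     (\<integral>\<^sup>+ z. ennreal_of_enat (vote_T L s r a b (received g \<theta> C (fst z) (snd z)))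
        \<partial>sample_space \<mu> \<nu> R \<theta>)"

definition delay where
  "delay \<mu> \<nu> R g C L s r a b = max (exp_T \<mu> \<nu> R g C L s r a b 0) (exp_T \<mu> \<nu> R g C L s r a b 1)"

definition perf_ratio where
  "perf_ratio \<mu> \<nu> R g C L s r a b =
     (let e = max (alpha_err \<mu> \<nu> R g C L s r a b) (beta_err \<mu> \<nu> R g C L s r a b) in
      (if e = 0 then \<infinity> else ereal (- ln e)) / enn2ereal (delay \<mu> \<nu> R g C L s r a b))"

end

theory Submission
  imports Defs
begin


lemma nn_int_PiM_prod:
  fixes M :: "'i \<Rightarrow> 'a measure"
  assumes M: "\<And>i. prob_space (M i)" and K: "finite K"
    and F: "\<And>k. k\<in>K \<Longrightarrow> F k \<in> borel_measurable (M k)"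
  shows "(\<integral>\<^sup>+x. (\<Prod>k\<in>K. F k (x k)) \<partial>PiM UNIV M) = (\<Prod>k\<in>K. \<integral>\<^sup>+ v. F k v \<partial>M k)"
proof -
  interpret product_prob_space M UNIV
    by (intro product_prob_spaceI M)
  have "(\<integral>\<^sup>+x. (\<Prod>k\<in>K. F k (x k)) \<partial>PiM UNIV M) =
        (\<integral>\<^sup>+x. (\<lambda>y. \<Prod>k\<in>K. F k (y k)) (restrict x K) \<partial>PiM UNIV M)"
    by (intro nn_integral_cong) auto
  also have "\<dots> = (\<integral>\<^sup>+y. (\<Prod>k\<in>K. F k (y k)) \<partial>distr (PiM UNIV M) (PiM K M) (\<lambda>x. restrict x K))"
    by (rule nn_integral_distr[symmetric, OF measurable_restrict_subset])
       (use F K in \<open>auto intro!: borel_measurable_prod_ennreal\<close>)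
  also have "\<dots> = (\<integral>\<^sup>+y. (\<Prod>k\<in>K. F k (y k)) \<partial>PiM K M)"
    by (subst distr_PiM_restrict_finite) (use K in auto)
  also have "\<dots> = (\<Prod>k\<in>K. \<integral>\<^sup>+ v. F k v \<partial>M k)"
    by (rule product_nn_integral_prod) (use K F in auto)
  finally show ?thesis .
qed

lemma prob_space_nested:
  assumes "prob_space P"
  shows "prob_space (PiM UNIV (\<lambda>_::'i. PiM UNIV (\<lambda>_::'j. P)))"
  by (intro prob_space_PiM assms)

lemma key_nested:
  fixes P :: "'a measure" and Q :: "('i \<times> 'j) set"
  assumes P: "prob_space P" and Q: "finite Q" and g: "g \<in> borel_measurable P"
  shows "(\<integral>\<^sup>+x. (\<Prod>q\<in>Q. g (x (fst q) (snd q))) \<partial>PiM UNIV (\<lambda>_::'i. PiM UNIV (\<lambda>_::'j. P)))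
         = (\<integral>\<^sup>+v. g v \<partial>P) ^ card Q"
proof -
  define K where "K = fst ` Q"
  define B where "B k = {i. (k, i) \<in> Q}" for k
  have K: "finite K" using Q by (simp add: K_def)
  have B: "finite (B k)" for k
    using Q unfolding B_def by (rule finite_subset[rotated, OF finite_imageI[of Q snd]]) force
  have QS: "Q = Sigma K B" by (auto simp: K_def B_def image_iff) force
  have "(\<integral>\<^sup>+x. (\<Prod>q\<in>Q. g (x (fst q) (snd q))) \<partial>PiM UNIV (\<lambda>_::'i. PiM UNIV (\<lambda>_::'j. P)))
     = (\<integral>\<^sup>+x. (\<Prod>k\<in>K. (\<lambda>v. \<Prod>i\<in>B k. g (v i)) (x k)) \<partial>PiM UNIV (\<lambda>_::'i. PiM UNIV (\<lambda>_::'j. P)))"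
    unfolding QS by (intro nn_integral_cong) (simp add: prod.Sigma K B split_beta)
  also have "\<dots> = (\<Prod>k\<in>K. \<integral>\<^sup>+ v. (\<Prod>i\<in>B k. g (v i)) \<partial>PiM UNIV (\<lambda>_::'j. P))"
    by (rule nn_int_PiM_prod) (use K g P in \<open>auto intro!: prob_space_PiM borel_measurable_prod_ennreal\<close>)
  also have "\<dots> = (\<Prod>k\<in>K. (\<integral>\<^sup>+v. g v \<partial>P) ^ card (B k))"
    by (intro prod.cong refl, subst nn_int_PiM_prod) (use B g P in auto)
  also have "\<dots> = (\<integral>\<^sup>+v. g v \<partial>P) ^ card Q"
    unfolding QS by (subst card_SigmaI) (use K B in \<open>auto simp: power_sum\<close>)
  finally show ?thesis .
qed

lemma meas_coord2:
  "(\<lambda>x. x a b) \<in> measurable (PiM UNIV (\<lambda>_. PiM UNIV (\<lambda>_. P))) P"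
proof -
  have "(\<lambda>x. x a) \<in> measurable (PiM UNIV (\<lambda>_. PiM UNIV (\<lambda>_. P))) (PiM UNIV (\<lambda>_. P))"
    by (rule measurable_component_singleton) simp
  moreover have "(\<lambda>y. y b) \<in> measurable (PiM UNIV (\<lambda>_. P)) P"
    by (rule measurable_component_singleton) simp
  ultimately show ?thesis by (rule measurable_compose)
qed

lemma key2:
  fixes P :: "'a measure" and J :: "'i set" and D :: "'i \<Rightarrow> 'j set"
  assumes P: "prob_space P" and J: "finite J" and D: "\<And>i. i \<in> J \<Longrightarrow> finite (D i)"
    and g: "g \<in> borel_measurable P"
  shows "(\<integral>\<^sup>+x. (\<Prod>i\<in>J. c * (\<Prod>j\<in>D i. g (x j i))) \<partial>PiM UNIV (\<lambda>_::'j. PiM UNIV (\<lambda>_::'i. P)))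
         = (\<Prod>i\<in>J. c * (\<integral>\<^sup>+v. g v \<partial>P) ^ card (D i))"
proof -
  define Q where "Q = (\<lambda>(i, j). (j, i)) ` Sigma J D"
  have inj: "inj_on (\<lambda>(i::'i, j::'j). (j, i)) (Sigma J D)" by (auto simp: inj_on_def)
  have Q: "finite Q" using J D by (auto simp: Q_def)
  have cardQ: "card Q = (\<Sum>i\<in>J. card (D i))"
    unfolding Q_def using J D by (subst card_image[OF inj]) auto
  have pr: "(\<Prod>q\<in>Q. g (x (fst q) (snd q))) = (\<Prod>i\<in>J. \<Prod>j\<in>D i. g (x j i))" for x
    unfolding Q_def using J D by (subst prod.reindex[OF inj]) (simp add: prod.Sigma split_beta)
  have "(\<integral>\<^sup>+x. (\<Prod>i\<in>J. c * (\<Prod>j\<in>D i. g (x j i))) \<partial>PiM UNIV (\<lambda>_::'j. PiM UNIV (\<lambda>_::'i. P)))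
      = (\<integral>\<^sup>+x. c ^ card J * (\<Prod>q\<in>Q. g (x (fst q) (snd q))) \<partial>PiM UNIV (\<lambda>_::'j. PiM UNIV (\<lambda>_::'i. P)))"
    by (intro nn_integral_cong) (simp add: pr prod.distrib)
  also have "\<dots> = c ^ card J * (\<integral>\<^sup>+v. g v \<partial>P) ^ card Q"
    by (subst nn_integral_cmult) (use P Q g in \<open>auto intro!: borel_measurable_prod_ennreal simp: key_nested\<close>,
        rule measurable_compose[OF meas_coord2 g])
  also have "\<dots> = (\<Prod>i\<in>J. c * (\<integral>\<^sup>+v. g v \<partial>P) ^ card (D i))"
    by (simp add: cardQ prod.distrib power_sum)
  finally show ?thesis .
qed


lemma exp_conv:
  fixes t u v :: real
  assumes "0 \<le> t" "t \<le> 1"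
  shows "exp ((1 - t) * u + t * v) \<le> (1 - t) * exp u + t * exp v"
  using convex_onD[OF exp_convex, of t u v] assms by (simp add: algebra_simps)

lemma exp_conv0:
  fixes t y :: real
  assumes "0 \<le> t" "t \<le> 1"
  shows "exp (t * y) \<le> 1 - t + t * exp y"
  using exp_conv[OF assms, of 0 y] by simp

lemma exp_diff_lim:
  fixes y :: real
  shows "((\<lambda>h. (exp (h * y) - 1) / h) \<longlongrightarrow> y) (at 0)"
proof -
  have "((\<lambda>h. exp (h * y)) has_real_derivative (exp (0 * y) * y)) (at 0)"
    by (auto intro!: derivative_eq_intros)
  then show ?thesis by (simp add: DERIV_def)
qed

locale walk =
  fixes P :: "real measure" and \<Lambda> :: "real \<Rightarrow> real"
  assumes P: "prob_space P" and sP: "sets P = sets borel"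
    and \<Lambda>m: "\<Lambda> \<in> borel_measurable borel"
    and \<Lambda>i: "integrable P \<Lambda>" and neg: "(\<integral>x. \<Lambda> x \<partial>P) < 0"
    and one: "(\<integral>\<^sup>+x. ennreal (exp (\<Lambda> x)) \<partial>P) = 1"

sublocale walk \<subseteq> prob_space P by (rule P)

context walk
begin

lemma \<Lambda>mP[measurable]: "\<Lambda> \<in> borel_measurable P"
  using \<Lambda>m by (simp add: measurable_cong_sets[OF sP refl])

lemma exp_int: "integrable P (\<lambda>x. exp (\<Lambda> x))"
  using one by (intro integrableI_nonneg) (auto simp: AE_I2 less_top[symmetric])

lemma exp_int_eq: "(\<integral>x. exp (\<Lambda> x) \<partial>P) = 1"
proof -
  have "ennreal (\<integral>x. exp (\<Lambda> x) \<partial>P) = 1"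
    using one by (subst nn_integral_eq_integral[symmetric]) (auto intro: exp_int)
  then show ?thesis by simp
qed

definition \<psi> :: "real \<Rightarrow> real" where
  "\<psi> t = (\<integral>x. exp (t * \<Lambda> x) \<partial>P)"

lemma exp_t_int:
  assumes "0 \<le> t" "t \<le> 1"
  shows "integrable P (\<lambda>x. exp (t * \<Lambda> x))"
proof (rule Bochner_Integration.integrable_bound[OF _ _ AE_I2])
  show "integrable P (\<lambda>x. 1 - t + t * exp (\<Lambda> x))"
    using exp_int by auto
  show "norm (exp (t * \<Lambda> x)) \<le> norm (1 - t + t * exp (\<Lambda> x))" for x
  proof -
    have "0 \<le> t * exp (\<Lambda> x)" using assms by simp
    then show ?thesis using exp_conv0[OF assms, of "\<Lambda> x"] assms by simp
  qed
qed auto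

end

context walk begin
lemma psi_le1:
  assumes "0 \<le> t" "t \<le> 1"
  shows "\<psi> t \<le> 1"
proof -
  have "\<psi> t \<le> (\<integral>x. 1 - t + t * exp (\<Lambda> x) \<partial>P)"
    unfolding \<psi>_def
    by (intro integral_mono exp_t_int assms exp_conv0) (use exp_int in auto)
  also have "\<dots> = 1"
    using exp_int exp_int_eq by (simp add: prob_space)
  finally show ?thesis .
qed

lemma psi_pos: "0 < \<psi> t" if "0 \<le> t" "t \<le> 1"
  using integral_less_AE_space[of "\<lambda>_. 0" "\<lambda>x. exp (t * \<Lambda> x)"] exp_t_int[OF that]
  unfolding \<psi>_def using emeasure_space_1 by auto

lemma psi_nn:
  assumes "0 \<le> t" "t \<le> 1"
  shows "(\<integral>\<^sup>+x. ennreal (exp (t * \<Lambda> x)) \<partial>P) = ennreal (\<psi> t)"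
  unfolding \<psi>_def using exp_t_int[OF assms]
  by (subst nn_integral_eq_integral) auto

end

context walk begin
lemma psi_conv:
  assumes "0 \<le> w" "w \<le> 1" "0 \<le> t0" "t0 \<le> 1"
  shows "\<psi> ((1 - w) * t0 + w) \<le> (1 - w) * \<psi> t0 + w"
proof -
  have "\<psi> ((1 - w) * t0 + w) \<le> (\<integral>x. (1 - w) * exp (t0 * \<Lambda> x) + w * exp (\<Lambda> x) \<partial>P)"
    unfolding \<psi>_def
  proof (intro integral_mono)
    show "integrable P (\<lambda>x. exp (((1 - w) * t0 + w) * \<Lambda> x))"
    proof (intro exp_t_int)
      show "0 \<le> (1 - w) * t0 + w" using assms by simp
      have "(1 - w) * t0 \<le> (1 - w) * 1" using assms by (intro mult_left_mono) auto
      then show "(1 - w) * t0 + w \<le> 1" by simp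
    qed
    show "integrable P (\<lambda>x. (1 - w) * exp (t0 * \<Lambda> x) + w * exp (\<Lambda> x))"
      using exp_t_int[OF assms(3,4)] exp_int by auto
    show "exp (((1 - w) * t0 + w) * \<Lambda> x) \<le> (1 - w) * exp (t0 * \<Lambda> x) + w * exp (\<Lambda> x)" for x
      using exp_conv[OF assms(1,2), of "t0 * \<Lambda> x" "\<Lambda> x"] by (simp add: algebra_simps)
  qed
  also have "\<dots> = (1 - w) * \<psi> t0 + w"
    using exp_t_int[OF assms(3,4)] exp_int exp_int_eq by (simp add: \<psi>_def)
  finally show ?thesis .
qed

end

context walk begin
lemma psi_small:
  assumes "0 < e"
  shows "\<exists>t. 0 < t \<and> t \<le> 1/2 \<and> \<psi> t \<le> 1 - t * (- (\<integral>x. \<Lambda> x \<partial>P) - e)"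
proof -
  define tt :: "nat \<Rightarrow> real" where "tt n = inverse (real (Suc (Suc n)))" for n
  have tt0: "0 < tt n" "tt n \<le> 1" for n by (auto simp: tt_def inverse_le_1_iff)
  have tt2: "tt n \<le> 1/2" for n unfolding tt_def by (simp add: field_simps)
  have ttlim: "filterlim tt (at 0) sequentially"
  proof (rule filterlim_atI)
    show "tt \<longlonglongrightarrow> 0" unfolding tt_def by (rule LIMSEQ_Suc[OF LIMSEQ_inverse_real_of_nat])
    show "eventually (\<lambda>n. tt n \<noteq> 0) sequentially"
      using tt0 by (intro always_eventually allI) (metis less_irrefl)
  qed
  define s where "s n x = (exp (tt n * \<Lambda> x) - 1) / tt n" for n x
  have lo: "\<Lambda> x \<le> s n x" for n x
  proof -
    have "1 + tt n * \<Lambda> x \<le> exp (tt n * \<Lambda> x)" by (rule exp_ge_add_one_self)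
    then show ?thesis using tt0[of n] by (simp add: s_def field_simps)
  qed
  have hi: "s n x \<le> exp (\<Lambda> x) - 1" for n x
  proof -
    have "exp (tt n * \<Lambda> x) \<le> 1 - tt n + tt n * exp (\<Lambda> x)"
      using tt0[of n] by (intro exp_conv0) auto
    then show ?thesis using tt0[of n] by (simp add: s_def field_simps)
  qed
  have "(\<lambda>n. integral\<^sup>L P (s n)) \<longlonglongrightarrow> integral\<^sup>L P \<Lambda>"
  proof (rule integral_dominated_convergence[where w="\<lambda>x. \<bar>\<Lambda> x\<bar> + exp (\<Lambda> x) + 1"])
    show "integrable P (\<lambda>x. \<bar>\<Lambda> x\<bar> + exp (\<Lambda> x) + 1)"
      using \<Lambda>i exp_int by auto
    show "s n \<in> borel_measurable P" for n unfolding s_def by measurable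
    show "AE x in P. (\<lambda>n. s n x) \<longlonglongrightarrow> \<Lambda> x"
      proof (rule AE_I2)
      fix x show "(\<lambda>n. s n x) \<longlonglongrightarrow> \<Lambda> x"
        unfolding s_def using filterlim_compose[OF exp_diff_lim[of "\<Lambda> x"] ttlim] by simp
    qed
    show "AE x in P. norm (s n x) \<le> \<bar>\<Lambda> x\<bar> + exp (\<Lambda> x) + 1" for n
      proof (rule AE_I2)
      fix x have "0 < exp (\<Lambda> x)" by simp
      then show "norm (s n x) \<le> \<bar>\<Lambda> x\<bar> + exp (\<Lambda> x) + 1"
        using lo[of x n] hi[of n x] unfolding real_norm_def by linarith
    qed
  qed simp
  then have "eventually (\<lambda>n. integral\<^sup>L P (s n) < integral\<^sup>L P \<Lambda> + e) sequentially"
    using assms by (intro order_tendstoD) auto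
  then obtain n where n: "integral\<^sup>L P (s n) < integral\<^sup>L P \<Lambda> + e"
    by (auto simp: eventually_sequentially)
  have "integral\<^sup>L P (s n) = (\<psi> (tt n) - 1) / tt n"
    unfolding s_def \<psi>_def using exp_t_int[of "tt n"] tt0[of n]
    by (simp add: prob_space)
  with n have "\<psi> (tt n) - 1 \<le> tt n * (integral\<^sup>L P \<Lambda> + e)"
    using tt0[of n] by (simp add: field_simps)
  then show ?thesis using tt0[of n] tt2[of n]
    by (intro exI[of _ "tt n"]) (auto simp: algebra_simps)
qed
end


context walk begin

abbreviation "NN \<equiv> PiM UNIV (\<lambda>_::nat. PiM UNIV (\<lambda>_::nat. P))"

lemma NN_prob: "prob_space NN"
  by (intro prob_space_PiM P)

lemma coordN[measurable]: "(\<lambda>x. x a b) \<in> borel_measurable NN"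
  using meas_coord2[of a b P] measurable_cong_sets[OF refl sP] by metis

lemma LcoordN[measurable]: "(\<lambda>x. \<Lambda> (x a b)) \<in> borel_measurable NN"
  by (rule measurable_compose[OF meas_coord2 \<Lambda>mP])

lemma E2:
  assumes t: "0 \<le> t" "t \<le> 1"
  shows "emeasure NN {x\<in>space NN. -a < (\<Sum>j=1..n. \<Lambda> (x j i))} \<le> ennreal (exp (t * a) * \<psi> t ^ n)"
proof -
  let ?A = "{x\<in>space NN. -a < (\<Sum>j=1..n. \<Lambda> (x j i))}"
  have A: "?A \<in> sets NN" by measurable
  have "emeasure NN ?A = (\<integral>\<^sup>+x. indicator ?A x \<partial>NN)"
    using A by simp
  also have "\<dots> \<le> (\<integral>\<^sup>+x. (\<Prod>i'\<in>{i}. ennreal (exp (t * a)) * (\<Prod>j\<in>{1..n}. ennreal (exp (t * \<Lambda> (x j i')))))  \<partial>NN)"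
  proof (intro nn_integral_mono)
    fix x assume x: "x \<in> space NN"
    have "(\<Prod>i'\<in>{i}. ennreal (exp (t * a)) * (\<Prod>j\<in>{1..n}. ennreal (exp (t * \<Lambda> (x j i')))))
        = ennreal (exp (t * (a + (\<Sum>j=1..n. \<Lambda> (x j i)))))"
      by (simp add: prod_ennreal exp_sum ennreal_mult' distrib_left sum_distrib_left exp_add)
    moreover have "x \<in> ?A \<Longrightarrow> 1 \<le> exp (t * (a + (\<Sum>j=1..n. \<Lambda> (x j i))))"
      using t by (auto intro!: mult_nonneg_nonneg)
    ultimately show "indicator ?A x \<le> (\<Prod>i'\<in>{i}. ennreal (exp (t * a)) * (\<Prod>j\<in>{1..n}. ennreal (exp (t * \<Lambda> (x j i')))))"
      by (auto simp: indicator_def)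
  qed
  also have "\<dots> = (\<Prod>i'\<in>{i}. ennreal (exp (t * a)) * (\<integral>\<^sup>+v. ennreal (exp (t * \<Lambda> v)) \<partial>P) ^ card {1..n})"
    by (rule key2) (use P in auto)
  also have "\<dots> = ennreal (exp (t * a) * \<psi> t ^ n)"
    using psi_nn[OF t] psi_pos[OF t] by (simp add: ennreal_mult' ennreal_power)
  finally show ?thesis .
qed

lemma geo_bound:
  fixes q :: real assumes "0 \<le> q" "q < 1"
  shows "(\<Sum>k\<in>{1..n}. q ^ k) \<le> 1 / (1 - q)"
proof -
  have "(\<Sum>k\<in>{1..n}. q ^ k) \<le> (\<Sum>k. q ^ k)"
    using assms by (intro sum_le_suminf summable_geometric) auto
  then show ?thesis using suminf_geometric[of q] assms by simp
qed

lemma E1: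
  assumes t: "0 \<le> t" "t \<le> 1" and q: "\<psi> t < 1" and J: "finite J"
  shows "emeasure NN {x\<in>space NN. \<forall>i\<in>J. \<exists>k\<ge>1. a \<le> (\<Sum>j=1..k. \<Lambda> (x j i))}
           \<le> ennreal ((exp (- t * a) / (1 - \<psi> t)) ^ card J)"
proof -
  define c where "c = ennreal (exp (- t * a))"
  define g where "g v = ennreal (exp (t * \<Lambda> v))" for v
  define G where "G = ennreal (\<psi> t)"
  have gm: "g \<in> borel_measurable P" unfolding g_def by measurable
  have G: "(\<integral>\<^sup>+v. g v \<partial>P) = G" unfolding g_def G_def by (rule psi_nn[OF t])
  define En where "En n = {x\<in>space NN. \<forall>i\<in>J. \<exists>k\<in>{1..n}. a \<le> (\<Sum>j=1..k. \<Lambda> (x j i))}" for n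
  have En_sets: "En n \<in> sets NN" for n unfolding En_def using J by measurable
  have inc: "incseq En" unfolding incseq_def En_def by force
  have Un: "(\<Union>n. En n) = {x\<in>space NN. \<forall>i\<in>J. \<exists>k\<ge>1. a \<le> (\<Sum>j=1..k. \<Lambda> (x j i))}"
  proof (intro set_eqI iffI)
    fix x assume "x \<in> (\<Union>n. En n)" then show "x \<in> {x\<in>space NN. \<forall>i\<in>J. \<exists>k\<ge>1. a \<le> (\<Sum>j=1..k. \<Lambda> (x j i))}"
      unfolding En_def by force
  next
    fix x assume x: "x \<in> {x\<in>space NN. \<forall>i\<in>J. \<exists>k\<ge>1. a \<le> (\<Sum>j=1..k. \<Lambda> (x j i))}"
    then have "\<forall>i\<in>J. \<exists>k. k \<ge> 1 \<and> a \<le> (\<Sum>j=1..k. \<Lambda> (x j i))" by blast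
    from bchoice[OF this] obtain f where f: "\<And>i. i \<in> J \<Longrightarrow> f i \<ge> 1 \<and> a \<le> (\<Sum>j=1..f i. \<Lambda> (x j i))"
      by blast
    have "f i \<le> (\<Sum>i\<in>J. f i)" if "i \<in> J" for i
      using J that by (intro member_le_sum) auto
    then have "x \<in> En (\<Sum>i\<in>J. f i)" using x f unfolding En_def by force
    then show "x \<in> (\<Union>n. En n)" by blast
  qed
  have bnd: "emeasure NN (En n) \<le> ennreal ((exp (- t * a) / (1 - \<psi> t)) ^ card J)" for n
  proof -
    have "emeasure NN (En n) = (\<integral>\<^sup>+x. indicator (En n) x \<partial>NN)"
      using En_sets by simp
    also have "\<dots> \<le> (\<integral>\<^sup>+x. (\<Prod>i\<in>J. \<Sum>k\<in>{1..n}. c * (\<Prod>j\<in>{1..k}. g (x j i))) \<partial>NN)"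
    proof (intro nn_integral_mono)
      fix x assume x: "x \<in> space NN"
      have "1 \<le> (\<Prod>i\<in>J. \<Sum>k\<in>{1..n}. c * (\<Prod>j\<in>{1..k}. g (x j i)))" if xE: "x \<in> En n"
      proof (rule prod_ge_1)
        fix i assume i: "i \<in> J"
        then obtain k where k: "k \<in> {1..n}" "a \<le> (\<Sum>j=1..k. \<Lambda> (x j i))" using xE unfolding En_def by blast
        have eq: "c * (\<Prod>j\<in>{1..k}. g (x j i)) = ennreal (exp (t * ((\<Sum>j=1..k. \<Lambda> (x j i)) - a)))"
        proof -
          have "(\<Prod>j\<in>{1..k}. g (x j i)) = ennreal (\<Prod>j\<in>{1..k}. exp (t * \<Lambda> (x j i)))"
            unfolding g_def by (rule prod_ennreal) auto
          also have "(\<Prod>j\<in>{1..k}. exp (t * \<Lambda> (x j i))) = exp (t * (\<Sum>j=1..k. \<Lambda> (x j i)))"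
            by (simp add: exp_sum sum_distrib_left)
          finally have "c * (\<Prod>j\<in>{1..k}. g (x j i)) = ennreal (exp (- t * a)) * ennreal (exp (t * (\<Sum>j=1..k. \<Lambda> (x j i))))"
            unfolding c_def by simp
          also have "\<dots> = ennreal (exp (- t * a) * exp (t * (\<Sum>j=1..k. \<Lambda> (x j i))))"
            by (rule ennreal_mult[symmetric]) auto
          also have "exp (- t * a) * exp (t * (\<Sum>j=1..k. \<Lambda> (x j i))) = exp (t * ((\<Sum>j=1..k. \<Lambda> (x j i)) - a))"
            by (simp add: exp_add[symmetric] algebra_simps)
          finally show ?thesis .
        qed
        have "1 \<le> exp (t * ((\<Sum>j=1..k. \<Lambda> (x j i)) - a))"
          using t k by auto
        then have "1 \<le> c * (\<Prod>j\<in>{1..k}. g (x j i))" unfolding eq by simp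
        also have "\<dots> \<le> (\<Sum>k\<in>{1..n}. c * (\<Prod>j\<in>{1..k}. g (x j i)))"
          using k by (intro member_le_sum) auto
        finally show "1 \<le> (\<Sum>k\<in>{1..n}. c * (\<Prod>j\<in>{1..k}. g (x j i)))" .
      qed
      then show "indicator (En n) x \<le> (\<Prod>i\<in>J. \<Sum>k\<in>{1..n}. c * (\<Prod>j\<in>{1..k}. g (x j i)))"
        by (auto simp: indicator_def)
    qed
    also have "\<dots> = (\<integral>\<^sup>+x. (\<Sum>\<kappa>\<in>PiE J (\<lambda>_. {1..n}). \<Prod>i\<in>J. c * (\<Prod>j\<in>{1..\<kappa> i}. g (x j i))) \<partial>NN)"
      using J by (subst prod_sum_PiE) auto
    also have "\<dots> = (\<Sum>\<kappa>\<in>PiE J (\<lambda>_. {1..n}). \<integral>\<^sup>+x. (\<Prod>i\<in>J. c * (\<Prod>j\<in>{1..\<kappa> i}. g (x j i))) \<partial>NN)"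
      by (rule nn_integral_sum) (unfold g_def, measurable)
    also have "\<dots> = (\<Sum>\<kappa>\<in>PiE J (\<lambda>_. {1..n}). \<Prod>i\<in>J. c * G ^ \<kappa> i)"
      by (intro sum.cong refl, subst key2) (use J P gm in \<open>auto simp: G\<close>)
    also have "\<dots> = (\<Prod>i\<in>J. \<Sum>k\<in>{1..n}. c * G ^ k)"
      using J by (subst prod_sum_PiE) auto
    also have "\<dots> = ennreal ((exp (- t * a) * (\<Sum>k\<in>{1..n}. \<psi> t ^ k)) ^ card J)"
    proof -
      have "c * G ^ k = ennreal (exp (- t * a) * \<psi> t ^ k)" for k
      proof -
        have GK: "G ^ k = ennreal (\<psi> t ^ k)" unfolding G_def
          by (rule ennreal_power) (use psi_pos[OF t] in linarith)
        have "c * G ^ k = ennreal (exp (- t * a)) * ennreal (\<psi> t ^ k)" by (simp only: c_def GK)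
        also have "\<dots> = ennreal (exp (- t * a) * \<psi> t ^ k)"
          by (rule ennreal_mult[symmetric]) (use psi_pos[OF t] in auto)
        finally show ?thesis .
      qed
      then have "(\<Sum>k\<in>{1..n}. c * G ^ k) = ennreal (\<Sum>k\<in>{1..n}. exp (- t * a) * \<psi> t ^ k)"
        using psi_pos[OF t] by (simp only:) (rule sum_ennreal, simp)
      also have "\<dots> = ennreal (exp (- t * a) * (\<Sum>k\<in>{1..n}. \<psi> t ^ k))"
        by (simp add: sum_distrib_left)
      finally show ?thesis
        using psi_pos[OF t] by (simp only: prod_constant, subst ennreal_power) (auto intro!: sum_nonneg mult_nonneg_nonneg)
    qed
    also have "\<dots> \<le> ennreal ((exp (- t * a) / (1 - \<psi> t)) ^ card J)"
    proof (intro ennreal_leI power_mono)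
      have "exp (- t * a) * (\<Sum>k\<in>{1..n}. \<psi> t ^ k) \<le> exp (- t * a) * (1 / (1 - \<psi> t))"
        using psi_pos[OF t] q by (intro mult_left_mono geo_bound) auto
      then show "exp (- t * a) * (\<Sum>k\<in>{1..n}. \<psi> t ^ k) \<le> exp (- t * a) / (1 - \<psi> t)" by simp
      show "0 \<le> exp (- t * a) * (\<Sum>k\<in>{1..n}. \<psi> t ^ k)"
        using psi_pos[OF t] by (intro mult_nonneg_nonneg sum_nonneg) auto
    qed
    finally show ?thesis .
  qed
  have "emeasure NN (\<Union>n. En n) = (SUP n. emeasure NN (En n))"
    using En_sets inc by (intro SUP_emeasure_incseq[symmetric]) auto
  also have "\<dots> \<le> ennreal ((exp (- t * a) / (1 - \<psi> t)) ^ card J)"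
    by (intro SUP_least bnd)
  finally show ?thesis unfolding Un .
qed

end


lemma enat_le_suminf:
  fixes F :: "nat \<Rightarrow> ennreal"
  assumes "\<And>n. enat n < T \<Longrightarrow> 1 \<le> F n"
  shows "ennreal_of_enat T \<le> suminf F"
proof -
  have fin: "of_nat t \<le> suminf F" if "enat t \<le> T" for t
  proof -
    have "(of_nat t :: ennreal) = (\<Sum>n<t. 1)" by simp
    also have "\<dots> \<le> (\<Sum>n<t. F n)"
    proof (intro sum_mono)
      fix n assume "n \<in> {..<t}"
      then have "enat n < enat t" by simp
      then have "enat n < T" using that by (rule less_le_trans)
      then show "1 \<le> F n" by (rule assms)
    qed
    also have "\<dots> \<le> suminf F"
      by (intro sum_le_suminf summableI) auto
    finally show ?thesis .
  qed
  show ?thesis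
  proof (cases T)
    case (enat t)
    then show ?thesis using fin[of t] by simp
  next
    case infinity
    have "(SUP N. of_nat N :: ennreal) \<le> suminf F"
      using fin by (intro SUP_least) (simp add: infinity)
    then show ?thesis using infinity by (simp add: ennreal_SUP_of_nat_eq_top)
  qed
qed

lemma geo_tail:
  fixes f :: "nat \<Rightarrow> ennreal" and A q :: real
  assumes f1: "\<And>n. f n \<le> 1" and fA: "\<And>n. f n \<le> ennreal (A * q ^ n)"
    and A: "1 \<le> A" and q: "0 < q" "q < 1"
  shows "suminf f \<le> ennreal (ln A / (- ln q) + 1 + 1 / (1 - q))"
proof -
  define n0 where "n0 = nat \<lceil>ln A / (- ln q)\<rceil>"
  have lnq: "ln q < 0" using q by simp
  have lnA: "0 \<le> ln A" using A by simp
  have n0ge: "ln A / (- ln q) \<le> real n0" unfolding n0_def by linarith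
  have n0le: "real n0 \<le> ln A / (- ln q) + 1"
  proof -
    have x0: "0 \<le> ln A / (- ln q)" using lnA lnq by (intro divide_nonneg_pos) auto
    have "real n0 = real_of_int \<lceil>ln A / (- ln q)\<rceil>" unfolding n0_def using x0 by simp
    also have "\<dots> \<le> ln A / (- ln q) + 1" by (rule of_int_ceiling_le_add_one)
    finally show ?thesis .
  qed
  have "ln A \<le> real n0 * (- ln q)"
    using n0ge lnq by (simp add: field_simps)
  then have "ln A + real n0 * ln q \<le> 0" by simp
  then have "exp (ln A + real n0 * ln q) \<le> 1" by simp
  moreover have "exp (ln A + real n0 * ln q) = A * q ^ n0"
  proof -
    have "exp (ln A + real n0 * ln q) = exp (ln A) * exp (real n0 * ln q)" by (rule exp_add)
    also have "exp (real n0 * ln q) = exp (ln q) ^ n0" by (rule exp_of_nat_mult)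
    also have "exp (ln q) = q" using q by simp
    also have "exp (ln A) = A" using A by simp
    finally show ?thesis .
  qed
  ultimately have Aq: "A * q ^ n0 \<le> 1" by simp
  have "suminf f = (\<Sum>j. f (j + n0)) + (\<Sum>j<n0. f j)"
    by (intro suminf_offset summableI)
  also have "(\<Sum>j<n0. f j) \<le> (\<Sum>j<n0. 1)"
    by (intro sum_mono f1)
  also have "(\<Sum>j. f (j + n0)) \<le> (\<Sum>j. ennreal (q ^ j))"
  proof (intro suminf_le summableI)
    fix j
    have "A * q ^ (j + n0) = (A * q ^ n0) * q ^ j" by (simp add: power_add)
    also have "\<dots> \<le> 1 * q ^ j"
      using Aq q by (intro mult_right_mono) auto
    finally have "A * q ^ (j + n0) \<le> q ^ j" by simp
    then show "f (j + n0) \<le> ennreal (q ^ j)"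
      by (rule order_trans[OF fA ennreal_leI])
  qed
  also have "(\<Sum>j. ennreal (q ^ j)) = ennreal (1 / (1 - q))"
  proof -
    have "(\<lambda>j. q ^ j) sums (1 / (1 - q))" using q by (intro geometric_sums) auto
    then have "(\<lambda>j. ennreal (q ^ j)) sums ennreal (1 / (1 - q))"
      by (subst sums_ennreal) (use q in auto)
    then show ?thesis by (rule sums_unique[symmetric])
  qed
  also have "ennreal (1 / (1 - q)) + (\<Sum>j<n0. 1) = ennreal (1 / (1 - q) + real n0)"
  proof -
    have "(\<Sum>j<n0. 1 :: ennreal) = ennreal (real n0)" by (simp add: ennreal_of_nat_eq_real_of_nat)
    then show ?thesis using q by (simp only:) (rule ennreal_plus[symmetric], auto)
  qed
  also have "\<dots> \<le> ennreal (ln A / (- ln q) + 1 + 1 / (1 - q))"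
    using n0le by (intro ennreal_leI) simp
  finally show ?thesis by (simp add: add_mono)
qed


lemma pair_fst_nn:
  assumes R: "prob_space R" and f: "f \<in> borel_measurable M"
  shows "(\<integral>\<^sup>+z. f (fst z) \<partial>(M \<Otimes>\<^sub>M R)) = (\<integral>\<^sup>+x. f x \<partial>M)"
proof -
  have "(\<integral>\<^sup>+x. f x \<partial>M) = (\<integral>\<^sup>+x. f x \<partial>distr (M \<Otimes>\<^sub>M R) M fst)"
    using prob_space.distr_pair_fst[OF R, of M] by simp
  also have "\<dots> = (\<integral>\<^sup>+z. f (fst z) \<partial>(M \<Otimes>\<^sub>M R))"
    by (rule nn_integral_distr) (use f in auto)
  finally show ?thesis ..
qed

lemma pair_fst_emeasure:
  assumes R: "prob_space R" and A: "A \<in> sets M"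
  shows "emeasure (M \<Otimes>\<^sub>M R) {z\<in>space (M \<Otimes>\<^sub>M R). fst z \<in> A} = emeasure M A"
proof -
  have "emeasure M A = emeasure (distr (M \<Otimes>\<^sub>M R) M fst) A"
    using prob_space.distr_pair_fst[OF R, of M] by simp
  also have "\<dots> = emeasure (M \<Otimes>\<^sub>M R) (fst -` A \<inter> space (M \<Otimes>\<^sub>M R))"
    by (rule emeasure_distr) (use A in auto)
  also have "fst -` A \<inter> space (M \<Otimes>\<^sub>M R) = {z\<in>space (M \<Otimes>\<^sub>M R). fst z \<in> A}" by auto
  finally show ?thesis ..
qed

context walk begin

lemma delay_gen:
  assumes t: "0 < t" "t \<le> 1" and q: "\<psi> t < 1" and H: "finite H" "H \<noteq> {}" and a: "0 \<le> a"
    and R: "prob_space R"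
    and T: "AE z in NN \<Otimes>\<^sub>M R. \<forall>n. 1 \<le> n \<longrightarrow> enat n < T z \<longrightarrow> (\<exists>i\<in>H. -a < (\<Sum>j=1..n. \<Lambda> (fst z j i)))"
  shows "(\<integral>\<^sup>+z. ennreal_of_enat (T z) \<partial>(NN \<Otimes>\<^sub>M R))
           \<le> ennreal (ln (real (card H) * exp (t * a)) / (- ln (\<psi> t)) + 1 + 1 / (1 - \<psi> t))"
proof -
  interpret N: prob_space NN by (rule NN_prob)
  define B where "B n = {x\<in>space NN. \<exists>i\<in>H. -a < (\<Sum>j=1..n. \<Lambda> (x j i))}" for n
  have Bs: "B n \<in> sets NN" for n unfolding B_def using H by measurable
  define F :: "nat \<Rightarrow> (nat \<Rightarrow> nat \<Rightarrow> real) \<Rightarrow> ennreal" where "F n x = (if n = 0 then 1 else indicator (B n) x)" for n x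
  have Fm: "F n \<in> borel_measurable NN" for n unfolding F_def using Bs by auto
  have "(\<integral>\<^sup>+z. ennreal_of_enat (T z) \<partial>(NN \<Otimes>\<^sub>M R)) \<le> (\<integral>\<^sup>+z. (\<Sum>n. F n (fst z)) \<partial>(NN \<Otimes>\<^sub>M R))"
  proof (rule nn_integral_mono_AE)
    show "AE z in NN \<Otimes>\<^sub>M R. ennreal_of_enat (T z) \<le> (\<Sum>n. F n (fst z))"
      using T
    proof (rule AE_mp[OF _ AE_I2], intro impI)
      fix z assume z: "z \<in> space (NN \<Otimes>\<^sub>M R)"
        and Tz: "\<forall>n. 1 \<le> n \<longrightarrow> enat n < T z \<longrightarrow> (\<exists>i\<in>H. -a < (\<Sum>j=1..n. \<Lambda> (fst z j i)))"
      have fz: "fst z \<in> space NN" using z by (auto simp: space_pair_measure)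
      show "ennreal_of_enat (T z) \<le> (\<Sum>n. F n (fst z))"
      proof (rule enat_le_suminf)
        fix n assume "enat n < T z"
        then show "1 \<le> F n (fst z)"
          using Tz fz by (cases "n = 0") (auto simp: F_def B_def indicator_def)
      qed
    qed
  qed
  also have "\<dots> = (\<Sum>n. \<integral>\<^sup>+z. F n (fst z) \<partial>(NN \<Otimes>\<^sub>M R))"
    by (rule nn_integral_suminf) (use Fm in auto)
  also have "\<dots> = (\<Sum>n. \<integral>\<^sup>+x. F n x \<partial>NN)"
    by (intro suminf_cong pair_fst_nn R Fm)
  also have "\<dots> \<le> ennreal (ln (real (card H) * exp (t * a)) / (- ln (\<psi> t)) + 1 + 1 / (1 - \<psi> t))"
  proof (rule geo_tail)
    have cH: "1 \<le> real (card H)" using H by (simp add: Suc_le_eq card_gt_0_iff)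
    have ea: "1 \<le> exp (t * a)" using t a by simp
    show A1: "1 \<le> real (card H) * exp (t * a)"
      using mult_mono[OF cH ea] by simp
    show "0 < \<psi> t" using psi_pos t by auto
    show "\<psi> t < 1" by (rule q)
    show "(\<integral>\<^sup>+x. F n x \<partial>NN) \<le> 1" for n
    proof -
      have "(\<integral>\<^sup>+x. F n x \<partial>NN) \<le> (\<integral>\<^sup>+x. 1 \<partial>NN)"
        by (intro nn_integral_mono) (auto simp: F_def indicator_def)
      then show ?thesis by (simp add: N.emeasure_space_1)
    qed
    show "(\<integral>\<^sup>+x. F n x \<partial>NN) \<le> ennreal (real (card H) * exp (t * a) * \<psi> t ^ n)" for n
    proof (cases "n = 0")
      case True
      then have "(\<integral>\<^sup>+x. F n x \<partial>NN) = 1" by (simp add: F_def N.emeasure_space_1)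
      then show ?thesis using True A1 by simp
    next
      case False
      have "(\<integral>\<^sup>+x. F n x \<partial>NN) = emeasure NN (B n)"
        using False Bs by (simp add: F_def)
      also have "B n = (\<Union>i\<in>H. {x\<in>space NN. -a < (\<Sum>j=1..n. \<Lambda> (x j i))})"
        unfolding B_def by auto
      also have "emeasure NN \<dots> \<le> (\<Sum>i\<in>H. emeasure NN {x\<in>space NN. -a < (\<Sum>j=1..n. \<Lambda> (x j i))})"
        by (rule emeasure_subadditive_finite) (use H in auto)
      also have "\<dots> \<le> (\<Sum>i\<in>H. ennreal (exp (t * a) * \<psi> t ^ n))"
        by (intro sum_mono E2) (use t in auto)
      also have "\<dots> = ennreal (real (card H) * exp (t * a) * \<psi> t ^ n)"
        using psi_pos[of t] t by (simp add: ennreal_of_nat_eq_real_of_nat ennreal_mult[symmetric] mult.assoc)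
      finally show ?thesis .
    qed
  qed
  finally show ?thesis .
qed


lemma err_gen:
  assumes t: "0 \<le> t" "t \<le> 1" and q: "\<psi> t < 1" and H: "finite H" and R: "prob_space R"
    and W: "AE z in NN \<Otimes>\<^sub>M R. tw z \<noteq> \<infinity> \<longrightarrow>
              (\<exists>J. J \<subseteq> H \<and> card J = m \<and> (\<forall>i\<in>J. \<exists>k\<ge>1. a \<le> (\<Sum>j=1..k. \<Lambda> (fst z j i))))"
  shows "dec_prob (NN \<Otimes>\<^sub>M R) tw tr \<le> real (card H choose m) * (exp (- t * a) / (1 - \<psi> t)) ^ m"
proof -
  interpret N: prob_space NN by (rule NN_prob)
  interpret R: prob_space R by (rule R)
  interpret O: prob_space "NN \<Otimes>\<^sub>M R" by (rule prob_space_pair) unfold_locales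
  define b where "b = (exp (- t * a) / (1 - \<psi> t)) ^ m"
  have b0: "0 \<le> b" unfolding b_def using q by simp
  define Js where "Js = {J. J \<subseteq> H \<and> card J = m}"
  have Js: "finite Js" unfolding Js_def using H by auto
  have cJs: "card Js = card H choose m" unfolding Js_def by (rule n_subsets[OF H])
  define AJ where "AJ J = {x\<in>space NN. \<forall>i\<in>J. \<exists>k\<ge>1. a \<le> (\<Sum>j=1..k. \<Lambda> (x j i))}" for J
  have AJs: "AJ J \<in> sets NN" if J: "J \<in> Js" for J
  proof -
    have fJ: "finite J" using J H unfolding Js_def by (auto intro: finite_subset)
    show ?thesis unfolding AJ_def using fJ by measurable
  qed
  define EJ where "EJ J = {z\<in>space (NN \<Otimes>\<^sub>M R). fst z \<in> AJ J}" for J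
  have EJs: "J \<in> Js \<Longrightarrow> EJ J \<in> sets (NN \<Otimes>\<^sub>M R)" for J
  proof -
    assume "J \<in> Js"
    then have "AJ J \<in> sets NN" by (rule AJs)
    then have "fst -` AJ J \<inter> space (NN \<Otimes>\<^sub>M R) \<in> sets (NN \<Otimes>\<^sub>M R)"
      by (rule measurable_sets[OF measurable_fst])
    moreover have "fst -` AJ J \<inter> space (NN \<Otimes>\<^sub>M R) = EJ J" unfolding EJ_def by auto
    ultimately show ?thesis by simp
  qed
  have mEJ: "measure (NN \<Otimes>\<^sub>M R) (EJ J) \<le> b" if J: "J \<in> Js" for J
  proof -
    have fJ: "finite J" and cJ: "card J = m" using J H unfolding Js_def by (auto intro: finite_subset)
    have "ennreal (measure (NN \<Otimes>\<^sub>M R) (EJ J)) = emeasure (NN \<Otimes>\<^sub>M R) (EJ J)"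
      by (simp add: O.emeasure_eq_measure)
    also have "\<dots> = emeasure NN (AJ J)"
      unfolding EJ_def by (rule pair_fst_emeasure[OF R AJs[OF J]])
    also have "\<dots> \<le> ennreal b"
      unfolding AJ_def b_def cJ[symmetric] by (rule E1[OF t q fJ])
    finally show ?thesis using b0 by simp
  qed
  define E where "E = (\<Union>J\<in>Js. EJ J)"
  have Es: "E \<in> sets (NN \<Otimes>\<^sub>M R)" unfolding E_def using Js EJs by auto
  have mE: "measure (NN \<Otimes>\<^sub>M R) E \<le> real (card H choose m) * b"
  proof -
    have "measure (NN \<Otimes>\<^sub>M R) E \<le> (\<Sum>J\<in>Js. measure (NN \<Otimes>\<^sub>M R) (EJ J))"
      unfolding E_def using Js EJs by (intro O.finite_measure_subadditive_finite) auto
    also have "\<dots> \<le> (\<Sum>J\<in>Js. b)" by (intro sum_mono mEJ)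
    also have "\<dots> = real (card H choose m) * b" using cJs by simp
    finally show ?thesis .
  qed
  from W obtain N0 where N0: "{z \<in> space (NN \<Otimes>\<^sub>M R). \<not> (tw z \<noteq> \<infinity> \<longrightarrow>
              (\<exists>J. J \<subseteq> H \<and> card J = m \<and> (\<forall>i\<in>J. \<exists>k\<ge>1. a \<le> (\<Sum>j=1..k. \<Lambda> (fst z j i)))))} \<subseteq> N0"
      "emeasure (NN \<Otimes>\<^sub>M R) N0 = 0" "N0 \<in> sets (NN \<Otimes>\<^sub>M R)"
    by (rule AE_E)
  define E' where "E' = E \<union> N0"
  have E's: "E' \<in> sets (NN \<Otimes>\<^sub>M R)" unfolding E'_def using Es N0 by auto
  have mE': "measure (NN \<Otimes>\<^sub>M R) E' \<le> real (card H choose m) * b"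
  proof -
    have "measure (NN \<Otimes>\<^sub>M R) E' \<le> measure (NN \<Otimes>\<^sub>M R) E + measure (NN \<Otimes>\<^sub>M R) N0"
      unfolding E'_def using Es N0 by (intro measure_Un_le) auto
    also have "measure (NN \<Otimes>\<^sub>M R) N0 = 0" using N0 by (simp add: O.emeasure_eq_measure)
    finally show ?thesis using mE by simp
  qed
  define A1 where "A1 = {z \<in> space (NN \<Otimes>\<^sub>M R). tw z < tr z}"
  define A2 where "A2 = {z \<in> space (NN \<Otimes>\<^sub>M R). tw z = tr z \<and> tw z \<noteq> \<infinity>}"
  have sub: "A1 \<union> A2 \<subseteq> E'"
  proof
    fix z assume z: "z \<in> A1 \<union> A2"
    then have zs: "z \<in> space (NN \<Otimes>\<^sub>M R)" and tz: "tw z \<noteq> \<infinity>"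
    proof -
      have ninf: "\<And>x y::enat. x < y \<Longrightarrow> x \<noteq> \<infinity>" by (case_tac x) auto
      show "z \<in> space (NN \<Otimes>\<^sub>M R)" "tw z \<noteq> \<infinity>"
        using z ninf unfolding A1_def A2_def by auto
    qed
    show "z \<in> E'"
    proof (cases "z \<in> N0")
      case False
      then obtain J where J: "J \<subseteq> H" "card J = m" "\<forall>i\<in>J. \<exists>k\<ge>1. a \<le> (\<Sum>j=1..k. \<Lambda> (fst z j i))"
        using N0(1) zs tz by blast
      have "fst z \<in> space NN" using zs by (auto simp: space_pair_measure)
      then have "z \<in> EJ J" unfolding EJ_def AJ_def using zs J by auto
      then show ?thesis using J unfolding E'_def E_def Js_def by auto
    qed (auto simp: E'_def)
  qed
  have disj: "A1 \<inter> A2 = {}" unfolding A1_def A2_def by auto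
  have "measure (NN \<Otimes>\<^sub>M R) A1 + 1/2 * measure (NN \<Otimes>\<^sub>M R) A2 \<le> measure (NN \<Otimes>\<^sub>M R) E'"
  proof (cases "A1 \<in> sets (NN \<Otimes>\<^sub>M R)"; cases "A2 \<in> sets (NN \<Otimes>\<^sub>M R)")
    assume a1: "A1 \<in> sets (NN \<Otimes>\<^sub>M R)" and a2: "A2 \<in> sets (NN \<Otimes>\<^sub>M R)"
    have "measure (NN \<Otimes>\<^sub>M R) A1 + measure (NN \<Otimes>\<^sub>M R) A2 = measure (NN \<Otimes>\<^sub>M R) (A1 \<union> A2)"
      using O.finite_measure_Union[OF a1 a2 disj] by simp
    also have "\<dots> \<le> measure (NN \<Otimes>\<^sub>M R) E'"
      using sub E's by (intro O.finite_measure_mono) auto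
    moreover have "0 \<le> measure (NN \<Otimes>\<^sub>M R) A2" by simp
    ultimately show ?thesis by linarith
  next
    assume a1: "A1 \<in> sets (NN \<Otimes>\<^sub>M R)" and a2: "A2 \<notin> sets (NN \<Otimes>\<^sub>M R)"
    have "measure (NN \<Otimes>\<^sub>M R) A1 \<le> measure (NN \<Otimes>\<^sub>M R) E'"
      using sub E's by (intro O.finite_measure_mono) auto
    moreover have "measure (NN \<Otimes>\<^sub>M R) A2 = 0" using a2 by (simp add: measure_notin_sets)
    ultimately show ?thesis by linarith
  next
    assume a1: "A1 \<notin> sets (NN \<Otimes>\<^sub>M R)" and a2: "A2 \<in> sets (NN \<Otimes>\<^sub>M R)"
    have "measure (NN \<Otimes>\<^sub>M R) A2 \<le> measure (NN \<Otimes>\<^sub>M R) E'"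
      using sub E's by (intro O.finite_measure_mono) auto
    moreover have "measure (NN \<Otimes>\<^sub>M R) A1 = 0" using a1 by (simp add: measure_notin_sets)
    moreover have "0 \<le> measure (NN \<Otimes>\<^sub>M R) A2" by simp
    ultimately show ?thesis by linarith
  next
    assume a1: "A1 \<notin> sets (NN \<Otimes>\<^sub>M R)" and a2: "A2 \<notin> sets (NN \<Otimes>\<^sub>M R)"
    then show ?thesis by (simp add: measure_notin_sets)
  qed
  then have "dec_prob (NN \<Otimes>\<^sub>M R) tw tr \<le> measure (NN \<Otimes>\<^sub>M R) E'"
    unfolding dec_prob_def A1_def A2_def .
  then show ?thesis using mE' unfolding b_def by simp
qed

end


lemma length_filter_mono:
  "(\<And>x. P x \<Longrightarrow> Q x) \<Longrightarrow> length (filter P xs) \<le> length (filter Q xs)"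
  by (induct xs) auto

lemma sorted_count_ge:
  fixes xs :: "'a::linorder list"
  assumes "sorted xs" "p < length xs"
  shows "p + 1 \<le> length (filter (\<lambda>x. x \<le> xs ! p) xs)"
proof -
  have "filter (\<lambda>x. x \<le> xs ! p) (take (p + 1) xs) = take (p + 1) xs"
  proof (rule filter_True, intro ballI)
    fix x assume "x \<in> set (take (p + 1) xs)"
    then obtain k where k: "k < length (take (p + 1) xs)" "x = take (p + 1) xs ! k"
      by (auto simp: in_set_conv_nth)
    then have "k \<le> p" "x = xs ! k" by auto
    then show "x \<le> xs ! p" using assms sorted_nth_mono by blast
  qed
  then have "length (filter (\<lambda>x. x \<le> xs ! p) (take (p + 1) xs)) = p + 1"
    using assms by simp
  moreover have "length (filter (\<lambda>x. x \<le> xs ! p) xs) = length (filter (\<lambda>x. x \<le> xs ! p) (take (p + 1) xs))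
      + length (filter (\<lambda>x. x \<le> xs ! p) (drop (p + 1) xs))"
    by (subst append_take_drop_id[symmetric, of xs "p + 1"], subst filter_append) simp
  ultimately show ?thesis by linarith
qed

lemma sorted_count_le:
  fixes xs :: "'a::linorder list"
  assumes "sorted xs" "p < length xs" "v < xs ! p"
  shows "length (filter (\<lambda>x. x \<le> v) xs) \<le> p"
proof -
  have "filter (\<lambda>x. x \<le> v) (drop p xs) = []"
  proof (rule filter_False, intro ballI)
    fix x assume "x \<in> set (drop p xs)"
    then obtain k where k: "k < length (drop p xs)" "x = drop p xs ! k"
      by (auto simp: in_set_conv_nth)
    then have "x = xs ! (p + k)" "p + k < length xs" by auto
    then have "xs ! p \<le> x" using assms sorted_nth_mono[of xs p "p + k"] by auto
    then show "\<not> x \<le> v" using assms by auto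
  qed
  moreover have "length (filter (\<lambda>x. x \<le> v) xs) = length (filter (\<lambda>x. x \<le> v) (take p xs))
      + length (filter (\<lambda>x. x \<le> v) (drop p xs))"
    by (subst append_take_drop_id[symmetric, of xs p], subst filter_append) simp
  moreover have "length (filter (\<lambda>x. x \<le> v) (take p xs)) \<le> p"
    using length_filter_le[of _ "take p xs"] by (metis length_take min.bounded_iff nle_le)
  ultimately show ?thesis by simp
qed

lemma count_map_upt:
  "length (filter P (sort (map t [1..<s+1]))) = card {i\<in>{1..s}. P (t i)}"
proof -
  have "length (filter P (sort (map t [1..<s+1]))) = length (filter P (map t [1..<s+1]))"
    by (simp add: filter_sort)
  also have "\<dots> = length (filter (P \<circ> t) [1..<s+1])" by simp
  also have "\<dots> = card ({x. (P \<circ> t) x} \<inter> set [1..<s+1])"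
    by (rule distinct_length_filter) simp
  also have "{x. (P \<circ> t) x} \<inter> set [1..<s+1] = {i\<in>{1..s}. P (t i)}" by auto
  finally show ?thesis .
qed

lemma OS1:
  fixes t :: "nat \<Rightarrow> enat"
  assumes r: "1 \<le> r" "r \<le> s" and fin: "order_stat s r t \<noteq> \<infinity>"
  shows "r \<le> card {i\<in>{1..s}. t i \<noteq> \<infinity>}"
proof -
  define xs where "xs = sort (map t [1..<s+1])"
  have sx: "sorted xs" and lx: "length xs = s" unfolding xs_def by auto
  have p: "r - 1 < length xs" using r lx by simp
  have "r \<le> length (filter (\<lambda>x. x \<le> xs ! (r - 1)) xs)"
    using sorted_count_ge[OF sx p] r by simp
  also have "\<dots> \<le> length (filter (\<lambda>x. x \<noteq> \<infinity>) xs)"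
  proof (rule length_filter_mono)
    fix x assume "x \<le> xs ! (r - 1)"
    then show "x \<noteq> \<infinity>" using fin unfolding order_stat_def xs_def[symmetric]
      by (metis enat_ord_simps(5) top.extremum_uniqueI top_enat_def)
  qed
  also have "\<dots> = card {i\<in>{1..s}. t i \<noteq> \<infinity>}" unfolding xs_def by (rule count_map_upt)
  finally show ?thesis .
qed

lemma OS2:
  fixes t :: "nat \<Rightarrow> enat"
  assumes r: "1 \<le> r" "r \<le> s" and cnt: "r \<le> card {i\<in>{1..s}. t i \<le> v}"
  shows "order_stat s r t \<le> v"
proof (rule ccontr)
  define xs where "xs = sort (map t [1..<s+1])"
  have sx: "sorted xs" and lx: "length xs = s" unfolding xs_def by auto
  have p: "r - 1 < length xs" using r lx by simp
  assume "\<not> order_stat s r t \<le> v"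
  then have "v < xs ! (r - 1)" unfolding order_stat_def xs_def by simp
  from sorted_count_le[OF sx p this] have "length (filter (\<lambda>x. x \<le> v) xs) \<le> r - 1" .
  moreover have "length (filter (\<lambda>x. x \<le> v) xs) = card {i\<in>{1..s}. t i \<le> v}"
    unfolding xs_def by (rule count_map_upt)
  ultimately show False using cnt r by simp
qed


lemma received_honest:
  assumes sup: "attack_support g \<theta> C x \<omega> = C" and i: "i \<notin> C" and k: "1 \<le> k"
  shows "received g \<theta> C x \<omega> k i = x k i"
proof -
  have "attack_vec g \<theta> C x \<omega> k i = 0"
  proof (rule ccontr)
    assume "attack_vec g \<theta> C x \<omega> k i \<noteq> 0"
    then have "i \<in> attack_support g \<theta> C x \<omega>" unfolding attack_support_def using k by auto
    then show False using sup i by simp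
  qed
  then show ?thesis unfolding received_def by simp
qed

lemma llr_honest:
  assumes sup: "attack_support g \<theta> C x \<omega> = C" and i: "i \<notin> C"
  shows "llr_sum L (received g \<theta> C x \<omega>) i n = (\<Sum>j=1..n. L (x j i))"
  unfolding llr_sum_def using received_honest[OF sup i] by (intro sum.cong) auto

lemma tau_up_fin: "tau_up L y b i \<noteq> \<infinity> \<longleftrightarrow> (\<exists>k\<ge>1. b \<le> llr_sum L y i k)"
  unfolding tau_up_def by auto

lemma tau_down_fin: "tau_down L y a i \<noteq> \<infinity> \<longleftrightarrow> (\<exists>k\<ge>1. llr_sum L y i k \<le> - a)"
  unfolding tau_down_def by auto

lemma tau_down_gt:
  assumes "enat n < tau_down L y a i" "1 \<le> n"
  shows "- a < llr_sum L y i n"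
proof (rule ccontr)
  assume "\<not> - a < llr_sum L y i n"
  then have c: "llr_sum L y i n \<le> - a" by simp
  then have "tau_down L y a i = enat (LEAST k. k \<ge> 1 \<and> llr_sum L y i k \<le> - a)"
    unfolding tau_down_def using assms(2) by auto
  moreover have "(LEAST k. k \<ge> 1 \<and> llr_sum L y i k \<le> - a) \<le> n"
    using c assms(2) by (intro Least_le) auto
  ultimately show False using assms(1) by simp
qed

lemma tau_up_gt:
  assumes "enat n < tau_up L y b i" "1 \<le> n"
  shows "llr_sum L y i n < b"
proof (rule ccontr)
  assume "\<not> llr_sum L y i n < b"
  then have c: "b \<le> llr_sum L y i n" by simp
  then have "tau_up L y b i = enat (LEAST k. k \<ge> 1 \<and> b \<le> llr_sum L y i k)"
    unfolding tau_up_def using assms(2) by auto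
  moreover have "(LEAST k. k \<ge> 1 \<and> b \<le> llr_sum L y i k) \<le> n"
    using c assms(2) by (intro Least_le) auto
  ultimately show False using assms(1) by simp
qed

lemma honest_count:
  fixes t :: "nat \<Rightarrow> enat"
  assumes C: "C \<subseteq> {1..s}" "card C = c" "2 * c < s"
    and fin: "order_stat s (s - c) t \<noteq> \<infinity>"
  obtains J where "J \<subseteq> {1..s} - C" "card J = s - 2 * c" "\<And>i. i \<in> J \<Longrightarrow> t i \<noteq> \<infinity>"
proof -
  define S where "S = {i\<in>{1..s}. t i \<noteq> \<infinity>}"
  have "s - c \<le> card S" unfolding S_def using C by (intro OS1 fin) auto
  moreover have "card S - card C \<le> card (S - C)"
    using C by (intro diff_card_le_card_Diff) (auto intro: finite_subset)
  ultimately have "s - 2 * c \<le> card (S - C)" using C by linarith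
  then obtain J where J: "J \<subseteq> S - C" "card J = s - 2 * c"
    by (meson obtain_subset_with_card_n)
  show ?thesis by (rule that[of J]) (use J in \<open>auto simp: S_def\<close>)
qed

lemma honest_max:
  fixes t :: "nat \<Rightarrow> enat"
  assumes C: "C \<subseteq> {1..s}" "card C = c" "2 * c < s"
    and lt: "enat n < order_stat s (s - c) t"
  shows "\<exists>i\<in>{1..s} - C. enat n < t i"
proof -
  define H where "H = {1..s} - C"
  have fH: "finite H" unfolding H_def by simp
  have cH: "card H = s - c" unfolding H_def using C by (simp add: card_Diff_subset finite_subset)
  then have Hne: "H \<noteq> {}" using C by auto
  define v where "v = Max (t ` H)"
  have "order_stat s (s - c) t \<le> v"
  proof (rule OS2)
    show "1 \<le> s - c" "s - c \<le> s" using C by auto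
    have "H \<subseteq> {i\<in>{1..s}. t i \<le> v}" unfolding v_def H_def using fH H_def by auto
    then have "card H \<le> card {i\<in>{1..s}. t i \<le> v}" by (intro card_mono) auto
    then show "s - c \<le> card {i\<in>{1..s}. t i \<le> v}" using cH by simp
  qed
  with lt have "enat n < Max (t ` H)" unfolding v_def by simp
  then show ?thesis using fH Hne unfolding H_def[symmetric] by (simp add: Max_gr_iff)
qed


lemma walk0:
  fixes \<mu> \<nu> :: "real measure" and L :: "real \<Rightarrow> real"
  assumes "prob_space \<nu>" and s\<nu>: "sets \<nu> = sets borel"
    and "prob_space \<mu>" and "sets \<mu> = sets borel"
    and Lm: "L \<in> borel_measurable borel"
    and dens: "\<mu> = density \<nu> (\<lambda>x. ennreal (exp (L x)))"
    and "integrable \<nu> L" and "0 < - (\<integral>x. L x \<partial>\<nu>)"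
  shows "walk \<nu> L"
proof -
  have Lnu: "L \<in> borel_measurable \<nu>" using Lm by (simp add: measurable_cong_sets[OF s\<nu> refl])
  have "1 = emeasure \<mu> (space \<mu>)" using prob_space.emeasure_space_1[OF assms(3)] by simp
  also have "\<dots> = emeasure (density \<nu> (\<lambda>x. ennreal (exp (L x)))) (space \<nu>)" using dens by simp
  also have "\<dots> = (\<integral>\<^sup>+ x. ennreal (exp (L x)) * indicator (space \<nu>) x \<partial>\<nu>)"
    by (rule emeasure_density) (use Lnu in auto)
  also have "\<dots> = (\<integral>\<^sup>+ x. ennreal (exp (L x)) \<partial>\<nu>)"
    by (intro nn_integral_cong) auto
  finally have one: "(\<integral>\<^sup>+ x. ennreal (exp (L x)) \<partial>\<nu>) = 1" ..
  have neg: "(\<integral>x. L x \<partial>\<nu>) < 0" using assms(8) by linarith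
  show ?thesis by (rule walk.intro[OF assms(1) s\<nu> Lm assms(7) neg one])
qed

lemma walk1:
  fixes \<mu> \<nu> :: "real measure" and L :: "real \<Rightarrow> real"
  assumes "prob_space \<nu>" and s\<nu>: "sets \<nu> = sets borel"
    and "prob_space \<mu>" and "sets \<mu> = sets borel"
    and Lm: "L \<in> borel_measurable borel"
    and dens: "\<mu> = density \<nu> (\<lambda>x. ennreal (exp (L x)))"
    and "integrable \<mu> L" and "0 < (\<integral>x. L x \<partial>\<mu>)"
  shows "walk \<mu> (\<lambda>x. - L x)"
proof -
  have Lnu: "L \<in> borel_measurable \<nu>" using Lm by (simp add: measurable_cong_sets[OF s\<nu> refl])
  have "(\<integral>\<^sup>+ x. ennreal (exp (- L x)) \<partial>\<mu>)
      = (\<integral>\<^sup>+ x. ennreal (exp (- L x)) \<partial>density \<nu> (\<lambda>x. ennreal (exp (L x))))" using dens by simp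
  also have "\<dots> = (\<integral>\<^sup>+ x. ennreal (exp (L x)) * ennreal (exp (- L x)) \<partial>\<nu>)"
    by (rule nn_integral_density) (use Lnu in auto)
  also have "\<dots> = (\<integral>\<^sup>+ x. 1 \<partial>\<nu>)"
  proof (intro nn_integral_cong)
    fix x
    have "ennreal (exp (L x)) * ennreal (exp (- L x)) = ennreal (exp (L x) * exp (- L x))"
      by (rule ennreal_mult[symmetric]) auto
    also have "exp (L x) * exp (- L x) = 1" by (simp add: exp_minus)
    finally show "ennreal (exp (L x)) * ennreal (exp (- L x)) = 1" by simp
  qed
  also have "\<dots> = 1" using prob_space.emeasure_space_1[OF assms(1)] by simp
  finally have one: "(\<integral>\<^sup>+ x. ennreal (exp (- L x)) \<partial>\<mu>) = 1" .
  have m: "(\<lambda>x. - L x) \<in> borel_measurable borel" using Lm by measurable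
  have i: "integrable \<mu> (\<lambda>x. - L x)" using assms(7) by simp
  have neg: "(\<integral>x. - L x \<partial>\<mu>) < 0" using assms(8) by simp
  show ?thesis by (rule walk.intro[OF assms(3,4) m i neg one])
qed


lemma card_honest:
  assumes "C \<subseteq> {1..s}" "card C = c"
  shows "card ({1..s} - C) = s - c"
  using assms by (simp add: card_Diff_subset finite_subset)

lemma err0:
  fixes \<mu> \<nu> :: "real measure" and L :: "real \<Rightarrow> real" and R :: "'r measure"
  assumes W: "walk \<nu> L" and C: "C \<subseteq> {1..s}" "card C = c" "2 * c < s" and R: "prob_space R"
    and sup: "AE z in sample_space \<mu> \<nu> R 0. attack_support g 0 C (fst z) (snd z) = C"
    and t: "0 \<le> t" "t \<le> 1" "walk.\<psi> \<nu> L t < 1"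
  shows "alpha_err \<mu> \<nu> R g C L s (s - c) a a
           \<le> real ((s - c) choose (s - 2 * c)) * (exp (- t * a) / (1 - walk.\<psi> \<nu> L t)) ^ (s - 2 * c)"
proof -
  interpret walk \<nu> L by (rule W)
  have ss: "sample_space \<mu> \<nu> R 0 = NN \<Otimes>\<^sub>M R" by (simp add: sample_space_def obs_law_def)
  have "alpha_err \<mu> \<nu> R g C L s (s - c) a a
      = dec_prob (NN \<Otimes>\<^sub>M R) (\<lambda>z. vote_up L s (s - c) a (received g 0 C (fst z) (snd z)))
          (\<lambda>z. vote_down L s (s - c) a (received g 0 C (fst z) (snd z)))"
    unfolding alpha_err_def ss ..
  also have "\<dots> \<le> real (card ({1..s} - C) choose (s - 2 * c)) * (exp (- t * a) / (1 - \<psi> t)) ^ (s - 2 * c)"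
  proof (rule err_gen[OF t(1,2,3) _ R])
    show "finite ({1..s} - C)" by simp
    show "AE z in NN \<Otimes>\<^sub>M R. vote_up L s (s - c) a (received g 0 C (fst z) (snd z)) \<noteq> \<infinity> \<longrightarrow>
            (\<exists>J. J \<subseteq> {1..s} - C \<and> card J = s - 2 * c \<and> (\<forall>i\<in>J. \<exists>k\<ge>1. a \<le> (\<Sum>j=1..k. L (fst z j i))))"
      using sup unfolding ss
    proof (rule eventually_mono, intro impI)
      fix z assume sz: "attack_support g 0 C (fst z) (snd z) = C"
        and v: "vote_up L s (s - c) a (received g 0 C (fst z) (snd z)) \<noteq> \<infinity>"
      obtain J where J: "J \<subseteq> {1..s} - C" "card J = s - 2 * c"
        "\<And>i. i \<in> J \<Longrightarrow> tau_up L (received g 0 C (fst z) (snd z)) a i \<noteq> \<infinity>"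
        using v unfolding vote_up_def by (rule honest_count[OF C]) blast
      have "\<forall>i\<in>J. \<exists>k\<ge>1. a \<le> (\<Sum>j=1..k. L (fst z j i))"
      proof
        fix i assume i: "i \<in> J"
        then have iC: "i \<notin> C" using J by auto
        from J(3)[OF i] obtain k where "k \<ge> 1" "a \<le> llr_sum L (received g 0 C (fst z) (snd z)) i k"
          unfolding tau_up_fin by blast
        then show "\<exists>k\<ge>1. a \<le> (\<Sum>j=1..k. L (fst z j i))"
          using llr_honest[OF sz iC] by auto
      qed
      then show "\<exists>J. J \<subseteq> {1..s} - C \<and> card J = s - 2 * c \<and> (\<forall>i\<in>J. \<exists>k\<ge>1. a \<le> (\<Sum>j=1..k. L (fst z j i)))"
        using J by blast
    qed
  qed
  finally show ?thesis using card_honest[OF C(1,2)] by simp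
qed

lemma err1:
  fixes \<mu> \<nu> :: "real measure" and L :: "real \<Rightarrow> real" and R :: "'r measure"
  assumes W: "walk \<mu> (\<lambda>x. - L x)" and C: "C \<subseteq> {1..s}" "card C = c" "2 * c < s" and R: "prob_space R"
    and sup: "AE z in sample_space \<mu> \<nu> R 1. attack_support g 1 C (fst z) (snd z) = C"
    and t: "0 \<le> t" "t \<le> 1" "walk.\<psi> \<mu> (\<lambda>x. - L x) t < 1"
  shows "beta_err \<mu> \<nu> R g C L s (s - c) a a
           \<le> real ((s - c) choose (s - 2 * c)) * (exp (- t * a) / (1 - walk.\<psi> \<mu> (\<lambda>x. - L x) t)) ^ (s - 2 * c)"
proof -
  interpret walk \<mu> "\<lambda>x. - L x" by (rule W)
  have ss: "sample_space \<mu> \<nu> R 1 = NN \<Otimes>\<^sub>M R" by (simp add: sample_space_def obs_law_def)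
  have "beta_err \<mu> \<nu> R g C L s (s - c) a a
      = dec_prob (NN \<Otimes>\<^sub>M R) (\<lambda>z. vote_down L s (s - c) a (received g 1 C (fst z) (snd z)))
          (\<lambda>z. vote_up L s (s - c) a (received g 1 C (fst z) (snd z)))"
    unfolding beta_err_def ss ..
  also have "\<dots> \<le> real (card ({1..s} - C) choose (s - 2 * c)) * (exp (- t * a) / (1 - \<psi> t)) ^ (s - 2 * c)"
  proof (rule err_gen[OF t(1,2,3) _ R])
    show "finite ({1..s} - C)" by simp
    show "AE z in NN \<Otimes>\<^sub>M R. vote_down L s (s - c) a (received g 1 C (fst z) (snd z)) \<noteq> \<infinity> \<longrightarrow>
            (\<exists>J. J \<subseteq> {1..s} - C \<and> card J = s - 2 * c \<and> (\<forall>i\<in>J. \<exists>k\<ge>1. a \<le> (\<Sum>j=1..k. - L (fst z j i))))"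
      using sup unfolding ss
    proof (rule eventually_mono, intro impI)
      fix z assume sz: "attack_support g 1 C (fst z) (snd z) = C"
        and v: "vote_down L s (s - c) a (received g 1 C (fst z) (snd z)) \<noteq> \<infinity>"
      obtain J where J: "J \<subseteq> {1..s} - C" "card J = s - 2 * c"
        "\<And>i. i \<in> J \<Longrightarrow> tau_down L (received g 1 C (fst z) (snd z)) a i \<noteq> \<infinity>"
        using v unfolding vote_down_def by (rule honest_count[OF C]) blast
      have "\<forall>i\<in>J. \<exists>k\<ge>1. a \<le> (\<Sum>j=1..k. - L (fst z j i))"
      proof
        fix i assume i: "i \<in> J"
        then have iC: "i \<notin> C" using J by auto
        from J(3)[OF i] obtain k where "k \<ge> 1" "llr_sum L (received g 1 C (fst z) (snd z)) i k \<le> - a"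
          unfolding tau_down_fin by blast
        then show "\<exists>k\<ge>1. a \<le> (\<Sum>j=1..k. - L (fst z j i))"
          using llr_honest[OF sz iC] by (auto simp: sum_negf)
      qed
      then show "\<exists>J. J \<subseteq> {1..s} - C \<and> card J = s - 2 * c \<and> (\<forall>i\<in>J. \<exists>k\<ge>1. a \<le> (\<Sum>j=1..k. - L (fst z j i)))"
        using J by blast
    qed
  qed
  finally show ?thesis using card_honest[OF C(1,2)] by simp
qed


lemma del0:
  fixes \<mu> \<nu> :: "real measure" and L :: "real \<Rightarrow> real" and R :: "'r measure"
  assumes W: "walk \<nu> L" and C: "C \<subseteq> {1..s}" "card C = c" "2 * c < s" and R: "prob_space R"
    and sup: "AE z in sample_space \<mu> \<nu> R 0. attack_support g 0 C (fst z) (snd z) = C"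
    and t: "0 < t" "t \<le> 1" "walk.\<psi> \<nu> L t < 1" and a: "0 \<le> a"
  shows "exp_T \<mu> \<nu> R g C L s (s - c) a a 0
           \<le> ennreal (ln (real (s - c) * exp (t * a)) / (- ln (walk.\<psi> \<nu> L t)) + 1 + 1 / (1 - walk.\<psi> \<nu> L t))"
proof -
  interpret walk \<nu> L by (rule W)
  have ss: "sample_space \<mu> \<nu> R 0 = NN \<Otimes>\<^sub>M R" by (simp add: sample_space_def obs_law_def)
  have cH: "card ({1..s} - C) = s - c" by (rule card_honest[OF C(1,2)])
  have "exp_T \<mu> \<nu> R g C L s (s - c) a a 0
      = (\<integral>\<^sup>+z. ennreal_of_enat (vote_T L s (s - c) a a (received g 0 C (fst z) (snd z))) \<partial>(NN \<Otimes>\<^sub>M R))"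
    unfolding exp_T_def ss ..
  also have "\<dots> \<le> ennreal (ln (real (card ({1..s} - C)) * exp (t * a)) / (- ln (\<psi> t)) + 1 + 1 / (1 - \<psi> t))"
  proof (rule delay_gen[OF t(1,2,3) _ _ a R])
    show "finite ({1..s} - C)" by simp
    show "{1..s} - C \<noteq> {}" using cH C by auto
    show "AE z in NN \<Otimes>\<^sub>M R. \<forall>n. 1 \<le> n \<longrightarrow> enat n < vote_T L s (s - c) a a (received g 0 C (fst z) (snd z))
            \<longrightarrow> (\<exists>i\<in>{1..s} - C. - a < (\<Sum>j=1..n. L (fst z j i)))"
      using sup unfolding ss
    proof (rule eventually_mono, intro allI impI)
      fix z n assume sz: "attack_support g 0 C (fst z) (snd z) = C" and n: "1 \<le> n"
        and lt: "enat n < vote_T L s (s - c) a a (received g 0 C (fst z) (snd z))"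
      then have "enat n < order_stat s (s - c) (tau_down L (received g 0 C (fst z) (snd z)) a)"
        unfolding vote_T_def vote_down_def by simp
      from honest_max[OF C this] obtain i where i: "i \<in> {1..s} - C"
        "enat n < tau_down L (received g 0 C (fst z) (snd z)) a i" by blast
      have "- a < llr_sum L (received g 0 C (fst z) (snd z)) i n" by (rule tau_down_gt[OF i(2) n])
      then show "\<exists>i\<in>{1..s} - C. - a < (\<Sum>j=1..n. L (fst z j i))"
        using llr_honest[OF sz, of i] i by auto
    qed
  qed
  finally show ?thesis using cH by simp
qed

lemma del1:
  fixes \<mu> \<nu> :: "real measure" and L :: "real \<Rightarrow> real" and R :: "'r measure"
  assumes W: "walk \<mu> (\<lambda>x. - L x)" and C: "C \<subseteq> {1..s}" "card C = c" "2 * c < s" and R: "prob_space R"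
    and sup: "AE z in sample_space \<mu> \<nu> R 1. attack_support g 1 C (fst z) (snd z) = C"
    and t: "0 < t" "t \<le> 1" "walk.\<psi> \<mu> (\<lambda>x. - L x) t < 1" and a: "0 \<le> a"
  shows "exp_T \<mu> \<nu> R g C L s (s - c) a a 1
           \<le> ennreal (ln (real (s - c) * exp (t * a)) / (- ln (walk.\<psi> \<mu> (\<lambda>x. - L x) t)) + 1
                + 1 / (1 - walk.\<psi> \<mu> (\<lambda>x. - L x) t))"
proof -
  interpret walk \<mu> "\<lambda>x. - L x" by (rule W)
  have ss: "sample_space \<mu> \<nu> R 1 = NN \<Otimes>\<^sub>M R" by (simp add: sample_space_def obs_law_def)
  have cH: "card ({1..s} - C) = s - c" by (rule card_honest[OF C(1,2)])
  have "exp_T \<mu> \<nu> R g C L s (s - c) a a 1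
      = (\<integral>\<^sup>+z. ennreal_of_enat (vote_T L s (s - c) a a (received g 1 C (fst z) (snd z))) \<partial>(NN \<Otimes>\<^sub>M R))"
    unfolding exp_T_def ss ..
  also have "\<dots> \<le> ennreal (ln (real (card ({1..s} - C)) * exp (t * a)) / (- ln (\<psi> t)) + 1 + 1 / (1 - \<psi> t))"
  proof (rule delay_gen[OF t(1,2,3) _ _ a R])
    show "finite ({1..s} - C)" by simp
    show "{1..s} - C \<noteq> {}" using cH C by auto
    show "AE z in NN \<Otimes>\<^sub>M R. \<forall>n. 1 \<le> n \<longrightarrow> enat n < vote_T L s (s - c) a a (received g 1 C (fst z) (snd z))
            \<longrightarrow> (\<exists>i\<in>{1..s} - C. - a < (\<Sum>j=1..n. - L (fst z j i)))"
      using sup unfolding ss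
    proof (rule eventually_mono, intro allI impI)
      fix z n assume sz: "attack_support g 1 C (fst z) (snd z) = C" and n: "1 \<le> n"
        and lt: "enat n < vote_T L s (s - c) a a (received g 1 C (fst z) (snd z))"
      then have "enat n < order_stat s (s - c) (tau_up L (received g 1 C (fst z) (snd z)) a)"
        unfolding vote_T_def vote_up_def by simp
      from honest_max[OF C this] obtain i where i: "i \<in> {1..s} - C"
        "enat n < tau_up L (received g 1 C (fst z) (snd z)) a i" by blast
      have "llr_sum L (received g 1 C (fst z) (snd z)) i n < a" by (rule tau_up_gt[OF i(2) n])
      then show "\<exists>i\<in>{1..s} - C. - a < (\<Sum>j=1..n. - L (fst z j i))"
        using llr_honest[OF sz, of i] i by (auto simp: sum_negf)
    qed
  qed
  finally show ?thesis using cH by simp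
qed


lemma ratio_lemma:
  fixes D :: ennreal and y Db N :: real and X :: ereal
  assumes D: "D \<le> ennreal Db" and Db: "0 < Db" and y: "0 \<le> y" and N: "y * Db < N"
    and X: "X = \<infinity> \<or> X = ereal N"
  shows "ereal y < X / enn2ereal D"
proof -
  have "D \<noteq> top" using D by (metis ennreal_neq_top neq_top_trans)
  then obtain d where d: "D = ennreal d" "0 \<le> d" by (cases D) auto
  have dDb: "d \<le> Db" using D d Db by simp
  have ed: "enn2ereal D = ereal d" using d by simp
  have Npos: "0 < N" using N y Db by (smt (verit) mult_nonneg_nonneg)
  show ?thesis
  proof (cases "d = 0")
    case True
    then show ?thesis using X Npos unfolding ed by (auto simp: divide_ereal_def)
  next
    case False
    then have dpos: "0 < d" using d by simp
    have "y * d \<le> y * Db" using y dDb by (intro mult_left_mono) auto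
    then have "y < N / d" using N dpos by (simp add: pos_less_divide_eq)
    then show ?thesis using X dpos unfolding ed by (auto simp: divide_inverse)
  qed
qed

lemma delay_real:
  fixes h q t J a :: real
  assumes h: "1 \<le> h" and q: "0 < q" "q < 1" and t: "0 < t" and J: "0 < J" and qt: "t * J \<le> 1 - q"
    and a: "0 \<le> a"
  shows "ln (h * exp (t * a)) / (- ln q) \<le> a / J + ln h / (t * J)"
proof -
  have lnh: "0 \<le> ln h" using h by simp
  have "ln (h * exp (t * a)) = ln h + t * a" using h by (simp add: ln_mult)
  moreover have "t * J \<le> - ln q"
  proof -
    have "ln q \<le> q - 1" using q by (intro ln_le_minus_one) auto
    then show ?thesis using qt by linarith
  qed
  moreover have "0 \<le> ln h + t * a" using lnh t a by simp
  ultimately have "(ln h + t * a) / (- ln q) \<le> (ln h + t * a) / (t * J)"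
    using t J q by (intro divide_left_mono mult_pos_pos) auto
  then have "ln (h * exp (t * a)) / (- ln q) \<le> (ln h + t * a) / (t * J)"
    using \<open>ln (h * exp (t * a)) = ln h + t * a\<close> by simp
  also have "\<dots> = a / J + ln h / (t * J)" using t J by (simp add: field_simps)
  finally show ?thesis .
qed


lemma delta_facts:
  fixes M I y d :: real
  assumes M: "0 < M" and I: "0 < I" and yy: "0 \<le> y" "y < M*I" and e: "2*M*(I+1)*d = M*I - y" and d: "0 < d"
  shows "d \<le> 1/2" "d < I" "y < M*(1-d)*(I-d)"
proof -
  have MI1: "0 < M*(I+1)" using M I by simp
  have "M*(I+1)*(2*d) \<le> M*(I+1)*1" using e yy M by (simp add: algebra_simps)
  then have "2*d \<le> 1" using MI1 mult_le_cancel_left_pos by blast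
  then show "d \<le> 1/2" by simp
  have "M*(I+1)*d < M*(I+1)*I"
  proof -
    have "M*(I+1)*d = (M*I - y)/2" using e by (simp add: algebra_simps)
    also have "\<dots> \<le> M*I/2" using yy by simp
    also have "\<dots> < M*(I+1)*I"
    proof -
      have "0 < M*I" using M I by simp
      moreover have "0 \<le> M*I*I" using M I by simp
      moreover have "M*(I+1)*I = M*I*I + M*I" by (simp add: algebra_simps)
      ultimately show ?thesis by linarith
    qed
    finally show ?thesis .
  qed
  then show "d < I" using MI1 mult_less_cancel_left_pos by blast
  have eq: "M*(1-d)*(I-d) = M*I - M*(I+1)*d + M*d^2" by (simp add: algebra_simps power2_eq_square)
  have B: "0 \<le> M*d^2" using M by simp
  have A: "M*(I+1)*d = (M*I - y)/2" using e by (simp add: algebra_simps)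
  have "M*(1-d)*(I-d) = M*I - (M*I - y)/2 + M*d^2" using eq A by simp
  moreover have "y < M*I - (M*I - y)/2 + M*d^2" using B yy by argo
  ultimately show "y < M*(1-d)*(I-d)" by simp
qed

theorem theorem3:
  fixes \<mu> \<nu> :: "real measure" and L :: "real \<Rightarrow> real"
    and s c :: nat and C :: "nat set"
    and R :: "'r measure"
    and g :: "nat \<Rightarrow> nat \<Rightarrow> (nat \<Rightarrow> nat \<Rightarrow> real) \<Rightarrow> (nat \<Rightarrow> nat \<Rightarrow> real) \<Rightarrow> 'r \<Rightarrow> (nat \<Rightarrow> real)"
  assumes "prob_space \<nu>" and "sets \<nu> = sets borel"
    and "prob_space \<mu>" and "sets \<mu> = sets borel"
    and "absolutely_continuous \<nu> \<mu>" and "absolutely_continuous \<mu> \<nu>"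
    and "L \<in> borel_measurable borel"
    and "\<mu> = density \<nu> (\<lambda>x. ennreal (exp (L x)))"
    and "integrable \<mu> L" and "integrable \<nu> L"
    and "0 < (\<integral>x. L x \<partial>\<mu>)" and "0 < - (\<integral>x. L x \<partial>\<nu>)"
    and "2 * c < s" and "C \<subseteq> {1..s}" and "card C = c"
    and "prob_space R"
    and "measurable_attack R g"
    and "\<forall>\<theta>\<in>{0,1}. AE z in sample_space \<mu> \<nu> R \<theta>. attack_support g \<theta> C (fst z) (snd z) = C"
  shows "ereal ((real s - 2 * real c) * min (- (\<integral>x. L x \<partial>\<nu>)) (\<integral>x. L x \<partial>\<mu>))
           \<le> Liminf at_top (\<lambda>a::real. perf_ratio \<mu> \<nu> R g C L s (s - c) a a)"
proof -
  have W0: "walk \<nu> L" by (rule walk0[OF assms(1,2,3,4,7,8,10,12)])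
  have W1: "walk \<mu> (\<lambda>x. - L x)" by (rule walk1[OF assms(1,2,3,4,7,8,9,11)])
  interpret W0: walk \<nu> L by (rule W0)
  interpret W1: walk \<mu> "\<lambda>x. - L x" by (rule W1)
  have C: "C \<subseteq> {1..s}" "card C = c" "2 * c < s" using assms(13,14,15) by auto
  have R: "prob_space R" by (rule assms(16))
  have sup0: "AE z in sample_space \<mu> \<nu> R 0. attack_support g 0 C (fst z) (snd z) = C"
    by (rule bspec[OF assms(18)]) simp
  have sup1: "AE z in sample_space \<mu> \<nu> R 1. attack_support g 1 C (fst z) (snd z) = C"
    by (rule bspec[OF assms(18)]) simp
  define I0 where "I0 = - (\<integral>x. L x \<partial>\<nu>)"
  define I1 where "I1 = (\<integral>x. L x \<partial>\<mu>)"
  define I where "I = min I0 I1"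
  define M where "M = real s - 2 * real c"
  define m where "m = s - 2 * c"
  define h where "h = s - c"
  have I0: "0 < I0" and I1: "0 < I1" using assms(11,12) by (auto simp: I0_def I1_def)
  have I: "0 < I" "I \<le> I0" "I \<le> I1" using I0 I1 by (auto simp: I_def)
  have Mm: "M = real m" using C by (simp add: M_def m_def)
  have M1: "1 \<le> M" using C by (simp add: M_def)
  have h1: "1 \<le> real h" using C by (simp add: h_def)
  have W1int: "(\<integral>x. - L x \<partial>\<mu>) = - I1" by (simp add: I1_def)
  show ?thesis
    unfolding le_Liminf_iff M_def[symmetric] I0_def[symmetric] I1_def[symmetric] I_def[symmetric]
  proof (intro allI impI)
    fix y assume y: "y < ereal (M * I)"
    have MI: "0 < M * I" using M1 I by simp
    obtain y' where y': "y \<le> ereal y'" "0 \<le> y'" "y' < M * I"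
    proof (cases "y \<le> 0")
      case True then show ?thesis using MI by (intro that[of 0]) (auto simp: zero_ereal_def)
    next
      case False
      then obtain r where r: "y = ereal r" using y by (cases y) auto
      then show ?thesis using False y by (intro that[of r]) auto
    qed
    define \<delta> where "\<delta> = (M * I - y') / (2 * M * (I + 1))"
    have \<delta>0: "0 < \<delta>" unfolding \<delta>_def using y' M1 I by (intro divide_pos_pos) auto
    have nz: "2 * M * (I + 1) \<noteq> 0" using M1 I by simp
    have e\<delta>: "2 * M * (I + 1) * \<delta> = M * I - y'"
      unfolding \<delta>_def using nz by (metis nonzero_mult_div_cancel_left times_divide_eq_right)
    note df = delta_facts[OF _ I(1) y'(2,3) e\<delta> \<delta>0]
    have \<delta>h: "\<delta> \<le> 1/2" and \<delta>I: "\<delta> < I" and key: "y' < M * (1 - \<delta>) * (I - \<delta>)"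
      using df M1 by auto
    obtain t0 where t0: "0 < t0" "t0 \<le> 1/2" "W0.\<psi> t0 \<le> 1 - t0 * (I0 - \<delta>)"
      using W0.psi_small[OF \<delta>0] by (auto simp: I0_def)
    obtain t1 where t1: "0 < t1" "t1 \<le> 1/2" "W1.\<psi> t1 \<le> 1 - t1 * (I1 - \<delta>)"
      using W1.psi_small[OF \<delta>0] W1int by auto
    define q0 where "q0 = W0.\<psi> t0"
    define q1 where "q1 = W1.\<psi> t1"
    have Id: "0 < I - \<delta>" using \<delta>I by simp
    have q0: "0 < q0" "q0 < 1" "t0 * (I - \<delta>) \<le> 1 - q0"
    proof -
      show "0 < q0" unfolding q0_def using t0 by (intro W0.psi_pos) auto
      have "t0 * (I - \<delta>) \<le> t0 * (I0 - \<delta>)" using t0 I by (intro mult_left_mono) auto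
      then show "t0 * (I - \<delta>) \<le> 1 - q0" using t0(3) unfolding q0_def by linarith
      moreover have "0 < t0 * (I - \<delta>)" using t0 Id by simp
      ultimately show "q0 < 1" by linarith
    qed
    have q1: "0 < q1" "q1 < 1" "t1 * (I - \<delta>) \<le> 1 - q1"
    proof -
      show "0 < q1" unfolding q1_def using t1 by (intro W1.psi_pos) auto
      have "t1 * (I - \<delta>) \<le> t1 * (I1 - \<delta>)" using t1 I by (intro mult_left_mono) auto
      then show "t1 * (I - \<delta>) \<le> 1 - q1" using t1(3) unfolding q1_def by linarith
      moreover have "0 < t1 * (I - \<delta>)" using t1 Id by simp
      ultimately show "q1 < 1" by linarith
    qed
    define p0 where "p0 = W0.\<psi> (1 - \<delta>)"
    define p1 where "p1 = W1.\<psi> (1 - \<delta>)"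
    have p0: "p0 < 1"
    proof -
      define w where "w = (1 - \<delta> - t0) / (1 - t0)"
      have w: "0 \<le> w" "w < 1" unfolding w_def using t0 \<delta>h \<delta>0 by (auto simp: field_simps)
      have nz: "1 - t0 \<noteq> 0" using t0 by simp
      have w1: "1 - w = \<delta> / (1 - t0)" unfolding w_def using nz by (simp add: field_simps)
      have "(1 - w) * t0 + w = 1 - (1 - w) * (1 - t0)" by (simp add: algebra_simps)
      also have "(1 - w) * (1 - t0) = \<delta>" using w1 nz by simp
      finally have tw: "(1 - w) * t0 + w = 1 - \<delta>" .
      have "p0 \<le> (1 - w) * q0 + w" unfolding p0_def q0_def tw[symmetric]
        using w t0 by (intro W0.psi_conv) auto
      also have "\<dots> < 1"
      proof -
        have "0 < (1 - w) * (1 - q0)" using w q0 by simp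
        then show ?thesis by (simp add: algebra_simps)
      qed
      finally show ?thesis .
    qed
    have p1: "p1 < 1"
    proof -
      define w where "w = (1 - \<delta> - t1) / (1 - t1)"
      have w: "0 \<le> w" "w < 1" unfolding w_def using t1 \<delta>h \<delta>0 by (auto simp: field_simps)
      have nz: "1 - t1 \<noteq> 0" using t1 by simp
      have w1: "1 - w = \<delta> / (1 - t1)" unfolding w_def using nz by (simp add: field_simps)
      have "(1 - w) * t1 + w = 1 - (1 - w) * (1 - t1)" by (simp add: algebra_simps)
      also have "(1 - w) * (1 - t1) = \<delta>" using w1 nz by simp
      finally have tw: "(1 - w) * t1 + w = 1 - \<delta>" .
      have "p1 \<le> (1 - w) * q1 + w" unfolding p1_def q1_def tw[symmetric]
        using w t1 by (intro W1.psi_conv) auto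
      also have "\<dots> < 1"
      proof -
        have "0 < (1 - w) * (1 - q1)" using w q1 by simp
        then show ?thesis by (simp add: algebra_simps)
      qed
      finally show ?thesis .
    qed
    define Bin where "Bin = real (h choose m)"
    define K where "K = Bin * ((1 / (1 - p0)) ^ m + (1 / (1 - p1)) ^ m)"
    have Bin: "1 \<le> Bin" unfolding Bin_def using C by (simp add: h_def m_def Suc_le_eq)
    have K: "0 < K" unfolding K_def using Bin p0 p1
      by (intro mult_pos_pos add_pos_pos zero_less_power) auto
    define Kd where "Kd = (ln (real h) / (t0 * (I - \<delta>)) + 1 + 1 / (1 - q0))
                          + (ln (real h) / (t1 * (I - \<delta>)) + 1 + 1 / (1 - q1))"
    have lnh: "0 \<le> ln (real h)" using h1 by simp
    have Kd: "0 < Kd"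
    proof -
      have "0 \<le> ln (real h) / (t0 * (I - \<delta>))" using lnh t0 Id by (intro divide_nonneg_pos) auto
      moreover have "0 \<le> ln (real h) / (t1 * (I - \<delta>))" using lnh t1 Id by (intro divide_nonneg_pos) auto
      moreover have "0 < 1 / (1 - q0)" "0 < 1 / (1 - q1)" using q0 q1 by auto
      ultimately show ?thesis unfolding Kd_def by linarith
    qed
    define coef where "coef = M * (1 - \<delta>) - y' / (I - \<delta>)"
    have coef: "0 < coef"
    proof -
      have "y' / (I - \<delta>) < M * (1 - \<delta>)" using key Id by (simp add: divide_less_eq)
      then show ?thesis unfolding coef_def by simp
    qed
    define a0 where "a0 = max 0 ((ln K + y' * Kd + 1) / coef)"
    show "eventually (\<lambda>a. y < perf_ratio \<mu> \<nu> R g C L s (s - c) a a) at_top"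
      unfolding eventually_at_top_linorder
    proof (intro exI[of _ a0] allI impI)
      fix a :: real assume a: "a0 \<le> a"
      have a0': "0 \<le> a" using a by (simp add: a0_def)
      define Na where "Na = M * (1 - \<delta>) * a - ln K"
      define Db where "Db = a / (I - \<delta>) + Kd"
      have Db: "0 < Db" unfolding Db_def using a0' Id Kd by (intro add_nonneg_pos divide_nonneg_pos) auto
      have aco: "ln K + y' * Kd + 1 \<le> a * coef"
      proof -
        have "(ln K + y' * Kd + 1) / coef \<le> a" using a unfolding a0_def by simp
        then show ?thesis using coef by (simp add: pos_divide_le_eq)
      qed
      have NDb: "y' * Db < Na"
      proof -
        have "Na - y' * Db = a * coef - ln K - y' * Kd"
          unfolding Na_def Db_def coef_def by (simp add: algebra_simps)
        then show ?thesis using aco by linarith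
      qed
      define E where "E = exp (- (M * (1 - \<delta>) * a))"
      have E0: "0 < E" unfolding E_def by simp
      have pw: "(exp (- (1 - \<delta>) * a) / (1 - p)) ^ m = (1 / (1 - p)) ^ m * E" for p
      proof -
        have "(exp (- (1 - \<delta>) * a) / (1 - p)) ^ m = exp (- (1 - \<delta>) * a) ^ m * (1 / (1 - p)) ^ m"
          by (simp add: power_divide)
        also have "exp (- (1 - \<delta>) * a) ^ m = exp (real m * (- (1 - \<delta>) * a))"
          by (rule exp_of_nat_mult[symmetric])
        also have "real m * (- (1 - \<delta>) * a) = - (M * (1 - \<delta>) * a)" using Mm by (simp add: algebra_simps)
        finally show ?thesis unfolding E_def by simp
      qed
      have al: "alpha_err \<mu> \<nu> R g C L s (s - c) a a \<le> Bin * (1 / (1 - p0)) ^ m * E"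
      proof -
        have "alpha_err \<mu> \<nu> R g C L s (s - c) a a
              \<le> real ((s - c) choose (s - 2 * c)) * (exp (- (1 - \<delta>) * a) / (1 - W0.\<psi> (1 - \<delta>))) ^ (s - 2 * c)"
          by (rule err0[OF W0 C R sup0]) (use \<delta>0 \<delta>h p0 in \<open>auto simp: p0_def\<close>)
        then show ?thesis unfolding Bin_def h_def[symmetric] m_def[symmetric] p0_def[symmetric] pw
          by (simp add: mult.assoc)
      qed
      have be: "beta_err \<mu> \<nu> R g C L s (s - c) a a \<le> Bin * (1 / (1 - p1)) ^ m * E"
      proof -
        have "beta_err \<mu> \<nu> R g C L s (s - c) a a
              \<le> real ((s - c) choose (s - 2 * c)) * (exp (- (1 - \<delta>) * a) / (1 - W1.\<psi> (1 - \<delta>))) ^ (s - 2 * c)"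
          by (rule err1[OF W1 C R sup1]) (use \<delta>0 \<delta>h p1 in \<open>auto simp: p1_def\<close>)
        then show ?thesis unfolding Bin_def h_def[symmetric] m_def[symmetric] p1_def[symmetric] pw
          by (simp add: mult.assoc)
      qed
      have al0: "0 \<le> alpha_err \<mu> \<nu> R g C L s (s - c) a a" unfolding alpha_err_def dec_prob_def by simp
      have be0: "0 \<le> beta_err \<mu> \<nu> R g C L s (s - c) a a" unfolding beta_err_def dec_prob_def by simp
      define e where "e = max (alpha_err \<mu> \<nu> R g C L s (s - c) a a) (beta_err \<mu> \<nu> R g C L s (s - c) a a)"
      have eK: "e \<le> K * E"
      proof -
        have "0 \<le> Bin * (1 / (1 - p0)) ^ m * E" "0 \<le> Bin * (1 / (1 - p1)) ^ m * E"
          using Bin p0 p1 E0 by auto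
        then have "e \<le> Bin * (1 / (1 - p0)) ^ m * E + Bin * (1 / (1 - p1)) ^ m * E"
          unfolding e_def using al be by linarith
        also have "\<dots> = K * E" unfolding K_def by (simp add: algebra_simps)
        finally show ?thesis .
      qed
      have e0: "0 \<le> e" unfolding e_def using al0 by simp
      have dl0: "exp_T \<mu> \<nu> R g C L s (s - c) a a 0 \<le> ennreal Db"
      proof -
        have "exp_T \<mu> \<nu> R g C L s (s - c) a a 0
            \<le> ennreal (ln (real (s - c) * exp (t0 * a)) / (- ln (W0.\<psi> t0)) + 1 + 1 / (1 - W0.\<psi> t0))"
          by (rule del0[OF W0 C R sup0 t0(1) _ _ a0']) (use t0 q0 in \<open>auto simp: q0_def\<close>)
        also have "\<dots> \<le> ennreal Db"
        proof (rule ennreal_leI)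
          have "ln (real h * exp (t0 * a)) / (- ln q0) \<le> a / (I - \<delta>) + ln (real h) / (t0 * (I - \<delta>))"
            by (rule delay_real[OF h1 q0(1,2) t0(1) Id q0(3) a0'])
          moreover have "0 \<le> ln (real h) / (t1 * (I - \<delta>)) + 1 + 1 / (1 - q1)"
            using lnh t1 Id q1 by (intro add_nonneg_nonneg divide_nonneg_pos mult_pos_pos) auto
          ultimately show "ln (real (s - c) * exp (t0 * a)) / (- ln (W0.\<psi> t0)) + 1 + 1 / (1 - W0.\<psi> t0) \<le> Db"
            unfolding Db_def Kd_def h_def[symmetric] q0_def[symmetric] by linarith
        qed
        finally show ?thesis .
      qed
      have dl1: "exp_T \<mu> \<nu> R g C L s (s - c) a a 1 \<le> ennreal Db"
      proof -
        have "exp_T \<mu> \<nu> R g C L s (s - c) a a 1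
            \<le> ennreal (ln (real (s - c) * exp (t1 * a)) / (- ln (W1.\<psi> t1)) + 1 + 1 / (1 - W1.\<psi> t1))"
          by (rule del1[OF W1 C R sup1 t1(1) _ _ a0']) (use t1 q1 in \<open>auto simp: q1_def\<close>)
        also have "\<dots> \<le> ennreal Db"
        proof (rule ennreal_leI)
          have "ln (real h * exp (t1 * a)) / (- ln q1) \<le> a / (I - \<delta>) + ln (real h) / (t1 * (I - \<delta>))"
            by (rule delay_real[OF h1 q1(1,2) t1(1) Id q1(3) a0'])
          moreover have "0 \<le> ln (real h) / (t0 * (I - \<delta>)) + 1 + 1 / (1 - q0)"
            using lnh t0 Id q0 by (intro add_nonneg_nonneg divide_nonneg_pos mult_pos_pos) auto
          ultimately show "ln (real (s - c) * exp (t1 * a)) / (- ln (W1.\<psi> t1)) + 1 + 1 / (1 - W1.\<psi> t1) \<le> Db"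
            unfolding Db_def Kd_def h_def[symmetric] q1_def[symmetric] by linarith
        qed
        finally show ?thesis .
      qed
      have dl: "delay \<mu> \<nu> R g C L s (s - c) a a \<le> ennreal Db"
        unfolding delay_def using dl0 dl1 by simp
      have "ereal y' < perf_ratio \<mu> \<nu> R g C L s (s - c) a a"
      proof (cases "e = 0")
        case True
        have "ereal y' < (if e = 0 then \<infinity> else ereal (- ln e)) / enn2ereal (delay \<mu> \<nu> R g C L s (s - c) a a)"
          by (rule ratio_lemma[OF dl Db y'(2) NDb]) (use True in simp)
        then show ?thesis unfolding perf_ratio_def Let_def e_def[symmetric] .
      next
        case False
        then have epos: "0 < e" using e0 by simp
        have "ln e \<le> ln (K * E)" using epos eK by simp
        also have "ln (K * E) = ln K - M * (1 - \<delta>) * a" using K E0 by (simp add: ln_mult E_def)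
        finally have "Na \<le> - ln e" unfolding Na_def by simp
        then have "y' * Db < - ln e" using NDb by simp
        have "ereal y' < (if e = 0 then \<infinity> else ereal (- ln e)) / enn2ereal (delay \<mu> \<nu> R g C L s (s - c) a a)"
          by (rule ratio_lemma[OF dl Db y'(2) \<open>y' * Db < - ln e\<close>]) (use False in simp)
        then show ?thesis unfolding perf_ratio_def Let_def e_def[symmetric] .
      qed
      then show "y < perf_ratio \<mu> \<nu> R g C L s (s - c) a a" using y' by auto
    qed
  qed
qed


end
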